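(* Let $F_1:\mathbb{R}^{n_1}\times\mathbb{R}^{n_2}\times\mathbb{R}^m\rightrightarrows\mathbb{R}^{n_1}$, $F_2:\mathbb{R}^{n_2}\times\mathbb{R}^m\rightrightarrows\mathbb{R}^{n_2}$ and consider the cascade $\dot x_1\in F_1(x_1,x_2,u)$, $\dot x_2\in F_2(x_2,u)$, written $\dot x\in F(x_1,x_2,u):=F_1(x_1,x_2,u)\times F_2(x_2,u)$. Assume: (A.1) there exist a nonpathological $V_2:\mathbb{R}^{n_2}\to\mathbb{R}$ and $\underline\alpha_2,\overline\alpha_2,\rho_2\in\mathcal{K}_\infty$, $\gamma_2\in\mathcal{K}$ with $\underline\alpha_2(|x_2|)\le V_2(x_2)\le\overline\alpha_2(|x_2|)$ and $\max\dot{\overline V}_{2,F_2}(x_2,u)\le-\rho_2(V_2(x_2))+\gamma_2(|u|)$ for all $x_2\in\mathbb{R}^{n_2}$, $u\in\mathbb{R}^m$; (A.2) there exist a nonpathological $V_1:\mathbb{R}^{n_1}\to\mathbb{R}$ and $\underline\alpha_1,\overline\alpha_1,\rho_1,\gamma_1\in\mathcal{K}_\infty$ with $\underline\alpha_1(|x_1|)\le V_1(x_1)\le\overline\alpha_1(|x_1|)$ and $\max\dot{\overline V}_{1,F_1}(x_1,x_2,u)\le-\rho_1(V_1(x_1))+\gamma_1(V_2(x_2))+\gamma_2(|u|)$ for all $x_1,x_2,u$; (A.3) with $\overline\nu(s):=\gamma_1(s)/\rho_2(s)$, there is $M>0$ such that $\lim_{s\to0^+}\overline\nu(s)\le M$,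 i.e. $\gamma_1(s)\in O(\rho_2(s))$ as $s\to0^+$. Then there exists a continuous nondecreasing $\nu:\mathbb{R}_+\to\mathbb{R}_+$ with $\nu(s)\ge4\overline\nu(s)$ for all $s$; moreover, with such $\nu$, the function $W(x_1,x_2):=\int_0^{V_2(x_2)}\nu(s)\,ds+V_1(x_1)$ is a nonpathological ISS function for the cascade: there exist $\underline\alpha,\overline\alpha\in\mathcal{K}_\infty$ with $\underline\alpha(|(x_1,x_2)|)\le W(x_1,x_2)\le\overline\alpha(|(x_1,x_2)|)$ for all $(x_1,x_2)$, and $\rho\in\mathcal{K}_\infty$, $\gamma\in\mathcal{K}$ with $\max\dot{\overline W}_F(x_1,x_2,u)\le-\rho(W(x_1,x_2))+\gamma(|u|)$ for all $(x_1,x_2)\in\mathbb{R}^{n_1}\times\mathbb{R}^{n_2}$, $u\in\mathbb{R}^m$.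
   Context: Clarke gradient of locally Lipschitz $V$: $\partial V(x)=\operatorname{co}\{\lim\nabla V(x_k):x_k\to x,\ x_k\notin\mathcal{N}_V\}$. Nonpathological: locally Lipschitz $V$ such that for every absolutely continuous $\varphi$, for a.e. $t$ there is $a_t$ with $\langle v,\dot\varphi(t)\rangle=a_t$ for all $v\in\partial V(\varphi(t))$. Lie derivatives: $\dot{\overline V}_{2,F_2}(x_2,u):=\{a\mid\exists f\in F_2(x_2,u):\langle p,f\rangle=a\ \forall p\in\partial V_2(x_2)\}$, $\dot{\overline V}_{1,F_1}(x_1,x_2,u):=\{a\mid\exists f\in F_1(x_1,x_2,u):\langle p,f\rangle=a\ \forall p\in\partial V_1(x_1)\}$, $\dot{\overline W}_F(x,u):=\{a\mid\exists f\in F(x,u):\langle p,f\rangle=a\ \forall p\in\partial W(x)\}$; $\max\emptyset=-\infty$. "Nonpathological ISS function" means $W$ is nonpathological and satisfies the stated bounds. *)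

theory Defs
  imports "HOL-Analysis.Analysis"
begin

definition classK :: "(real \<Rightarrow> real) \<Rightarrow> bool" where
  "classK \<alpha> \<longleftrightarrow> continuous_on {0..} \<alpha> \<and> \<alpha> 0 = 0 \<and> strict_mono_on {0..} \<alpha>"

definition classKinf :: "(real \<Rightarrow> real) \<Rightarrow> bool" where
  "classKinf \<alpha> \<longleftrightarrow> classK \<alpha> \<and> filterlim \<alpha> at_top at_top"

definition loc_lipschitz :: "('a::euclidean_space \<Rightarrow> real) \<Rightarrow> bool" where
  "loc_lipschitz V \<longleftrightarrow> (\<forall>x. \<exists>e>0. \<exists>L. L-lipschitz_on (ball x e) V)"

definition clarke_grad :: "('a::euclidean_space \<Rightarrow> real) \<Rightarrow> 'a \<Rightarrow> 'a set" where
  "clarke_grad V x = convex hull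
     {g. \<exists>xk gk. xk \<longlonglongrightarrow> x \<and> gk \<longlonglongrightarrow> g \<and>
          (\<forall>k. (V has_derivative (\<lambda>h. inner (gk k) h)) (at (xk k)))}"

definition abs_cont_on :: "real set \<Rightarrow> (real \<Rightarrow> 'a::real_normed_vector) \<Rightarrow> bool" where
  "abs_cont_on S \<phi> \<longleftrightarrow> (\<forall>\<epsilon>>0. \<exists>\<delta>>0. \<forall>(I::nat set) lo hi.
      finite I \<and> (\<forall>i\<in>I. lo i \<le> hi i \<and> lo i \<in> S \<and> hi i \<in> S) \<and>
      (\<forall>i\<in>I. \<forall>j\<in>I. i \<noteq> j \<longrightarrow> {lo i<..<hi i} \<inter> {lo j<..<hi j} = {}) \<and>
      (\<Sum>i\<in>I. hi i - lo i) < \<delta> \<longrightarrow>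
      (\<Sum>i\<in>I. norm (\<phi> (hi i) - \<phi> (lo i))) < \<epsilon>)"

definition nonpathological :: "('a::euclidean_space \<Rightarrow> real) \<Rightarrow> bool" where
  "nonpathological V \<longleftrightarrow> loc_lipschitz V \<and>
     (\<forall>(\<phi>::real \<Rightarrow> 'a) a b. abs_cont_on {a..b} \<phi> \<longrightarrow>
        (AE t in lebesgue. t \<in> {a..b} \<longrightarrow>
           \<phi> differentiable (at t) \<and>
           (\<exists>c. \<forall>v\<in>clarke_grad V (\<phi> t). inner v (vector_derivative \<phi> (at t)) = c)))"

definition lie_set :: "('a::euclidean_space \<Rightarrow> real) \<Rightarrow> 'a \<Rightarrow> 'a set \<Rightarrow> real set" where
  "lie_set V x Fx = {a. \<exists>f\<in>Fx. \<forall>p\<in>clarke_grad V x. inner p f = a}"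

text \<open>"max S \<le> c" with max of the empty set = -infinity.\<close>
definition max_le :: "real set \<Rightarrow> real \<Rightarrow> bool" where
  "max_le S c \<longleftrightarrow> (\<forall>a\<in>S. a \<le> c)"

end

theory Submission
  imports Defs
begin


lemma classK_nonneg: "classK f \<Longrightarrow> 0 \<le> x \<Longrightarrow> 0 \<le> f x"
  unfolding classK_def
  by (metis atLeast_iff dual_order.order_iff_strict order.refl strict_mono_onD)

lemma classK_pos: "classK f \<Longrightarrow> 0 < x \<Longrightarrow> 0 < f x"
  unfolding classK_def
  by (metis atLeast_iff less_imp_le order.refl strict_mono_onD)

lemma classK_mono: "classK f \<Longrightarrow> 0 \<le> x \<Longrightarrow> x \<le> y \<Longrightarrow> f x \<le> f y"
  unfolding classK_def
  by (metis atLeast_iff order.trans order_le_less strict_mono_onD)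

lemma classK_strict: "classK f \<Longrightarrow> 0 \<le> x \<Longrightarrow> x < y \<Longrightarrow> f x < f y"
  unfolding classK_def
  by (metis atLeast_iff order.trans less_imp_le strict_mono_onD)

lemma classK_cont: "classK f \<Longrightarrow> continuous_on {0..} f"
  unfolding classK_def by blast

lemma classK_0: "classK f \<Longrightarrow> f 0 = 0"
  unfolding classK_def by blast

lemma classKinf_K: "classKinf f \<Longrightarrow> classK f"
  unfolding classKinf_def by blast

lemma classKinf_lim: "classKinf f \<Longrightarrow> filterlim f at_top at_top"
  unfolding classKinf_def by blast

lemma classKI:
  assumes "continuous_on {0..} f" "f 0 = 0" "\<And>x y. 0 \<le> x \<Longrightarrow> x < y \<Longrightarrow> f x < f y"
  shows "classK f"
  unfolding classK_def using assms by (auto intro: strict_mono_onI)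

lemma classKinfI:
  assumes "classK f" "\<And>Z. \<exists>N. \<forall>x\<ge>N. Z \<le> f x"
  shows "classKinf f"
  unfolding classKinf_def filterlim_at_top eventually_at_top_linorder using assms by blast

lemma classKinf_large: "classKinf f \<Longrightarrow> \<exists>N. \<forall>x\<ge>N. Z \<le> f x"
  unfolding classKinf_def filterlim_at_top eventually_at_top_linorder by blast

lemma Kinf_comp:
  assumes f: "classKinf f" and g: "classKinf g"
  shows "classKinf (\<lambda>x. f (g x))"
proof (rule classKinfI)
  have gK: "classK g" and fK: "classK f" using f g by (auto dest: classKinf_K)
  show "classK (\<lambda>x. f (g x))"
  proof (rule classKI)
    show "continuous_on {0..} (\<lambda>x. f (g x))"
      by (rule continuous_on_compose2[OF classK_cont[OF fK] classK_cont[OF gK]])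
         (auto intro: classK_nonneg[OF gK])
    show "f (g 0) = 0" using classK_0[OF fK] classK_0[OF gK] by simp
    fix x y :: real assume "0 \<le> x" "x < y"
    then show "f (g x) < f (g y)"
      by (intro classK_strict[OF fK] classK_strict[OF gK] classK_nonneg[OF gK])
  qed
  fix Z
  obtain N1 where N1: "\<forall>x\<ge>N1. Z \<le> f x" using classKinf_large[OF f] by blast
  obtain N2 where N2: "\<forall>x\<ge>N2. N1 \<le> g x" using classKinf_large[OF g] by blast
  show "\<exists>N. \<forall>x\<ge>N. Z \<le> f (g x)" using N1 N2 by blast
qed

lemma Kinf_min:
  assumes f: "classKinf f" and g: "classKinf g"
  shows "classKinf (\<lambda>x. min (f x) (g x))"
proof (rule classKinfI)
  have gK: "classK g" and fK: "classK f" using f g by (auto dest: classKinf_K)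
  show "classK (\<lambda>x. min (f x) (g x))"
  proof (rule classKI)
    show "continuous_on {0..} (\<lambda>x. min (f x) (g x))"
      by (intro continuous_on_min classK_cont fK gK)
    show "min (f 0) (g 0) = 0" using classK_0[OF fK] classK_0[OF gK] by simp
    fix x y :: real assume "0 \<le> x" "x < y"
    then show "min (f x) (g x) < min (f y) (g y)"
      using classK_strict[OF fK] classK_strict[OF gK] by (smt (verit))
  qed
  fix Z
  obtain N1 where N1: "\<forall>x\<ge>N1. Z \<le> f x" using classKinf_large[OF f] by blast
  obtain N2 where N2: "\<forall>x\<ge>N2. Z \<le> g x" using classKinf_large[OF g] by blast
  show "\<exists>N. \<forall>x\<ge>N. Z \<le> min (f x) (g x)" using N1 N2 by (intro exI[of _ "max N1 N2"]) auto
qed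

lemma Kinf_add:
  assumes f: "classKinf f" and g: "classKinf g"
  shows "classKinf (\<lambda>x. f x + g x)"
proof (rule classKinfI)
  have gK: "classK g" and fK: "classK f" using f g by (auto dest: classKinf_K)
  show "classK (\<lambda>x. f x + g x)"
  proof (rule classKI)
    show "continuous_on {0..} (\<lambda>x. f x + g x)"
      by (intro continuous_on_add classK_cont fK gK)
    show "f 0 + g 0 = 0" using classK_0[OF fK] classK_0[OF gK] by simp
    fix x y :: real assume "0 \<le> x" "x < y"
    then show "f x + g x < f y + g y"
      using classK_strict[OF fK] classK_strict[OF gK] by (smt (verit))
  qed
  fix Z
  obtain N1 where N1: "\<forall>x\<ge>N1. Z \<le> f x" using classKinf_large[OF f] by blast
  show "\<exists>N. \<forall>x\<ge>N. Z \<le> f x + g x" using N1 classK_nonneg[OF gK]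
    by (intro exI[of _ "max N1 0"]) (smt (verit))
qed

lemma Kinf_half: "classKinf (\<lambda>x::real. x / 2)"
proof (rule classKinfI)
  show "classK (\<lambda>x::real. x / 2)"
    by (rule classKI) (auto intro!: continuous_intros)
  fix Z :: real show "\<exists>N. \<forall>x\<ge>N. Z \<le> x / 2" by (intro exI[of _ "2*Z"]) auto
qed

lemma Kinf_inverse:
  assumes a: "classKinf \<alpha>"
  obtains \<beta> where "classKinf \<beta>" "\<And>s. 0 \<le> s \<Longrightarrow> \<beta> (\<alpha> s) = s"
    "\<And>w. 0 \<le> w \<Longrightarrow> \<alpha> (\<beta> w) = w \<and> 0 \<le> \<beta> w"
proof -
  have aK: "classK \<alpha>" using a by (rule classKinf_K)
  have surj: "\<exists>s\<ge>0. s \<le> n \<and> \<alpha> s = w" if "0 \<le> w" "w \<le> \<alpha> n" "0 \<le> n" for w n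
    using IVT'[of \<alpha> 0 w n] that classK_0[OF aK]
      continuous_on_subset[OF classK_cont[OF aK], of "{0..n}"] by auto
  have surj2: "w \<in> \<alpha> ` {0..}" if "0 \<le> w" for w
  proof -
    obtain N where "\<forall>x\<ge>N. w \<le> \<alpha> x" using classKinf_large[OF a] by blast
    then have "w \<le> \<alpha> (max N 0)" by auto
    then show ?thesis using surj[OF that, of "max N 0"] by force
  qed
  have inj: "inj_on \<alpha> {0..}"
    by (rule strict_mono_on_imp_inj_on) (use aK in \<open>auto simp: classK_def\<close>)
  define \<beta> where "\<beta> = the_inv_into {0..} \<alpha>"
  have b1: "\<beta> (\<alpha> s) = s" if "0 \<le> s" for s
    unfolding \<beta>_def using the_inv_into_f_f[OF inj] that by auto
  have b2: "\<alpha> (\<beta> w) = w \<and> 0 \<le> \<beta> w" if "0 \<le> w" for w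
    unfolding \<beta>_def using f_the_inv_into_f[OF inj surj2[OF that]]
      the_inv_into_into[OF inj surj2[OF that]] by auto
  have bstrict: "\<beta> x < \<beta> y" if "0 \<le> x" "x < y" for x y
  proof (rule ccontr)
    assume "\<not> \<beta> x < \<beta> y"
    then have "\<beta> y \<le> \<beta> x" by simp
    moreover have "0 \<le> \<beta> y" using b2 that by auto
    ultimately have "\<alpha> (\<beta> y) \<le> \<alpha> (\<beta> x)" using classK_mono[OF aK] by blast
    then show False using b2 that by auto
  qed
  have bmono: "\<beta> x \<le> \<beta> y" if "0 \<le> x" "x \<le> y" for x y
    using bstrict that by (cases "x = y") (auto simp: less_imp_le)
  have cont: "continuous_on {0..} \<beta>"
    unfolding continuous_on_eq_continuous_within
  proof
    fix w :: real assume w: "w \<in> {0..}"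
    define n where "n = \<beta> (w + 1)"
    have n: "0 \<le> n" "\<alpha> n = w + 1" using b2[of "w+1"] w by (auto simp: n_def)
    have img: "\<alpha> ` {0..n} = {0..\<alpha> n}"
    proof
      show "\<alpha> ` {0..n} \<subseteq> {0..\<alpha> n}"
        using classK_nonneg[OF aK] classK_mono[OF aK] by auto
      show "{0..\<alpha> n} \<subseteq> \<alpha> ` {0..n}"
        using surj n by force
    qed
    have "continuous_on (\<alpha> ` {0..n}) \<beta>"
      by (rule continuous_on_inv)
         (use continuous_on_subset[OF classK_cont[OF aK], of "{0..n}"] b1 in auto)
    then have "continuous_on {0..\<alpha> n} \<beta>" using img by simp
    then have c: "continuous (at w within {0..\<alpha> n}) \<beta>"
      using w n by (auto simp: continuous_on_eq_continuous_within)
    have "at w within {0..} = at w within {0..\<alpha> n}"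
      by (rule at_within_nhd[where S="{..<\<alpha> n}"]) (use n in auto)
    then show "continuous (at w within {0..}) \<beta>" using c by simp
  qed
  have "classKinf \<beta>"
  proof (rule classKinfI)
    show "classK \<beta>"
      by (rule classKI[OF cont]) (use b1[of 0] classK_0[OF aK] bstrict in auto)
    fix Z
    show "\<exists>N. \<forall>x\<ge>N. Z \<le> \<beta> x"
    proof (intro exI[of _ "\<alpha> (max Z 0)"] allI impI)
      fix x assume "\<alpha> (max Z 0) \<le> x"
      then have "\<beta> (\<alpha> (max Z 0)) \<le> \<beta> x" using bmono classK_nonneg[OF aK] by auto
      then show "Z \<le> \<beta> x" using b1 by auto
    qed
  qed
  then show ?thesis using that b1 b2 by blast
qed



definition nt :: "(real \<Rightarrow> real) \<Rightarrow> real \<Rightarrow> real" where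
  "nt \<nu> s = \<nu> (max s 0)"

definition Gt :: "(real \<Rightarrow> real) \<Rightarrow> real \<Rightarrow> real" where
  "Gt \<nu> s = integral {-1..s} (nt \<nu>) - \<nu> 0"

definition nuok :: "(real \<Rightarrow> real) \<Rightarrow> bool" where
  "nuok \<nu> \<longleftrightarrow> continuous_on {0..} \<nu> \<and> mono_on {0..} \<nu> \<and> (\<forall>s\<ge>0. 0 \<le> \<nu> s)"

lemma nt_cont:
  assumes "nuok \<nu>" shows "continuous_on UNIV (nt \<nu>)"
proof -
  have c: "continuous_on {0..} \<nu>" using assms unfolding nuok_def by blast
  have m: "continuous_on UNIV (\<lambda>s::real. max s 0)"
    by (intro continuous_on_max continuous_on_id continuous_on_const)
  have "continuous_on UNIV (\<lambda>s. \<nu> (max s 0))"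
    by (rule continuous_on_compose2[OF c m]) auto
  then show ?thesis unfolding nt_def[abs_def] .
qed

lemma nt_isCont: assumes "nuok \<nu>" shows "isCont (nt \<nu>) s"
  using nt_cont[OF assms] continuous_on_eq_continuous_at[of UNIV "nt \<nu>"] by simp

lemma nt_nonneg: assumes "nuok \<nu>" shows "0 \<le> nt \<nu> s"
proof -
  have "\<forall>s\<ge>0. 0 \<le> \<nu> s" using assms unfolding nuok_def by blast
  then show ?thesis unfolding nt_def by simp
qed

lemma nt_mono: assumes "nuok \<nu>" "s \<le> t" shows "nt \<nu> s \<le> nt \<nu> t"
proof -
  have "mono_on {0..} \<nu>" using assms unfolding nuok_def by blast
  then have "\<nu> (max s 0) \<le> \<nu> (max t 0)"
    by (rule mono_onD) (use assms(2) in auto)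
  then show ?thesis unfolding nt_def .
qed

lemma nt_pos: "0 \<le> s \<Longrightarrow> nt \<nu> s = \<nu> s"
  unfolding nt_def by simp

lemma Gt_deriv:
  assumes "nuok \<nu>" "-1 < s"
  shows "(Gt \<nu> has_real_derivative nt \<nu> s) (at s)"
proof -
  have c: "continuous_on {-1..s+1} (nt \<nu>)"
    using nt_cont[OF assms(1)] continuous_on_subset by blast
  have "((\<lambda>u. integral {-1..u} (nt \<nu>)) has_vector_derivative nt \<nu> s) (at s within {-1..s+1})"
    by (rule integral_has_vector_derivative[OF c]) (use assms in auto)
  moreover have "at s within {-1..s+1} = at s"
    by (rule at_within_interior) (use assms in auto)
  ultimately have "((\<lambda>u. integral {-1..u} (nt \<nu>)) has_real_derivative nt \<nu> s) (at s)"
    by (simp add: has_real_derivative_iff_has_vector_derivative)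
  then show ?thesis unfolding Gt_def[abs_def]
    by (auto intro!: derivative_eq_intros)
qed

lemma Gt_isCont: "nuok \<nu> \<Longrightarrow> -1 < s \<Longrightarrow> isCont (Gt \<nu>) s"
  using Gt_deriv DERIV_isCont by blast

lemma Gt_eq:
  assumes "nuok \<nu>" "0 \<le> s"
  shows "Gt \<nu> s = integral {0..s} \<nu>"
proof -
  have int: "nt \<nu> integrable_on {-1..s}"
    using nt_cont[OF assms(1)] continuous_on_subset integrable_continuous_real by blast
  have "integral {-1..0} (nt \<nu>) + integral {0..s} (nt \<nu>) = integral {-1..s} (nt \<nu>)"
    by (rule Henstock_Kurzweil_Integration.integral_combine[OF _ assms(2) int]) auto
  moreover have "integral {-1..0} (nt \<nu>) = integral {-1..0} (\<lambda>_::real. \<nu> 0)"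
    by (rule Henstock_Kurzweil_Integration.integral_cong) (auto simp: nt_def)
  moreover have "integral {0..s} (nt \<nu>) = integral {0..s} \<nu>"
    by (rule Henstock_Kurzweil_Integration.integral_cong) (auto simp: nt_def)
  ultimately show ?thesis unfolding Gt_def by simp
qed

lemma Gt_mvt:
  assumes "nuok \<nu>" "-1 < s" "s < t"
  shows "\<exists>z. s < z \<and> z < t \<and> Gt \<nu> t - Gt \<nu> s = (t - s) * nt \<nu> z"
  using MVT2[OF assms(3), of "Gt \<nu>" "nt \<nu>"] Gt_deriv[OF assms(1)] assms by auto

lemma Gt_bounds:
  assumes "nuok \<nu>" "-1 < s" "s \<le> t"
  shows "nt \<nu> s * (t - s) \<le> Gt \<nu> t - Gt \<nu> s \<and> Gt \<nu> t - Gt \<nu> s \<le> nt \<nu> t * (t - s)"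
proof (cases "s = t")
  case False
  then obtain z where z: "s < z" "z < t" "Gt \<nu> t - Gt \<nu> s = (t - s) * nt \<nu> z"
    using Gt_mvt[OF assms(1,2)] assms(3) by force
  have "nt \<nu> s \<le> nt \<nu> z" "nt \<nu> z \<le> nt \<nu> t" using z nt_mono[OF assms(1)] by auto
  then show ?thesis using z assms(3)
    by (auto simp: mult.commute intro: mult_right_mono)
qed simp

lemma Gt_lip1:
  assumes "nuok \<nu>" "-1 < a" "a \<le> b"
  shows "\<bar>Gt \<nu> a - Gt \<nu> b\<bar> \<le> max (nt \<nu> a) (nt \<nu> b) * \<bar>a - b\<bar>"
proof -
  have 1: "nt \<nu> a * (b - a) \<le> Gt \<nu> b - Gt \<nu> a" "Gt \<nu> b - Gt \<nu> a \<le> nt \<nu> b * (b - a)"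
    using Gt_bounds[OF assms] by auto
  have "0 \<le> nt \<nu> a * (b - a)" using nt_nonneg[OF assms(1)] assms(3) by simp
  then have 2: "\<bar>Gt \<nu> a - Gt \<nu> b\<bar> = Gt \<nu> b - Gt \<nu> a" using 1 by linarith
  have "nt \<nu> b * (b - a) \<le> max (nt \<nu> a) (nt \<nu> b) * (b - a)"
    by (rule mult_right_mono) (use assms(3) in auto)
  then show ?thesis using 1 2 assms(3) by simp
qed

lemma Gt_lip:
  assumes "nuok \<nu>" "-1 < a" "-1 < b"
  shows "\<bar>Gt \<nu> a - Gt \<nu> b\<bar> \<le> max (nt \<nu> a) (nt \<nu> b) * \<bar>a - b\<bar>"
proof (cases "a \<le> b")
  case True
  then show ?thesis using Gt_lip1[OF assms(1,2) True] by simp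
next
  case False
  then show ?thesis using Gt_lip1[OF assms(1,3), of a]
    by (simp add: abs_minus_commute max.commute)
qed

lemma Gt_strict:
  assumes "nuok \<nu>" "\<forall>s>0. 0 < \<nu> s" "0 \<le> s" "s < t"
  shows "Gt \<nu> s < Gt \<nu> t"
proof -
  obtain z where z: "s < z" "z < t" "Gt \<nu> t - Gt \<nu> s = (t - s) * nt \<nu> z"
    using Gt_mvt[OF assms(1), of s t] assms by force
  have "0 < nt \<nu> z" using z assms nt_pos[of z] by auto
  then have "0 < (t - s) * nt \<nu> z" using z by simp
  then show ?thesis using z by linarith
qed

lemma G_Kinf:
  assumes "nuok \<nu>" "\<forall>s>0. 0 < \<nu> s"
  shows "classKinf (\<lambda>s. integral {0..s} \<nu>)"
proof (rule classKinfI)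
  show "classK (\<lambda>s. integral {0..s} \<nu>)"
  proof (rule classKI)
    have "continuous_on {0..} (Gt \<nu>)"
      using Gt_isCont[OF assms(1)] by (auto intro!: continuous_at_imp_continuous_on)
    then show "continuous_on {0..} (\<lambda>s. integral {0..s} \<nu>)"
      by (rule continuous_on_eq) (use Gt_eq[OF assms(1)] in auto)
    show "integral {0..0} \<nu> = 0" by simp
    fix x y :: real assume "0 \<le> x" "x < y"
    then show "integral {0..x} \<nu> < integral {0..y} \<nu>"
      using Gt_strict[OF assms, of x y] Gt_eq[OF assms(1)] by auto
  qed
  fix Z
  have p: "0 < \<nu> 1" using assms by auto
  show "\<exists>N. \<forall>x\<ge>N. Z \<le> integral {0..x} \<nu>"
  proof (intro exI[of _ "max 1 (1 + (Z - Gt \<nu> 1) / \<nu> 1)"] allI impI)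
    fix x assume x: "max 1 (1 + (Z - Gt \<nu> 1) / \<nu> 1) \<le> x"
    then have "(Z - Gt \<nu> 1) / \<nu> 1 \<le> x - 1" by auto
    then have "Z - Gt \<nu> 1 \<le> (x - 1) * \<nu> 1" using p by (simp add: pos_divide_le_eq)
    moreover have "nt \<nu> 1 * (x - 1) \<le> Gt \<nu> x - Gt \<nu> 1"
      using Gt_bounds[OF assms(1), of 1 x] x by auto
    ultimately have "Z \<le> Gt \<nu> x" using nt_pos[of 1] by (simp add: mult.commute)
    then show "Z \<le> integral {0..x} \<nu>" using Gt_eq[OF assms(1), of x] x by auto
  qed
qed



lemma grad_norm_le:
  fixes f :: "'a::euclidean_space \<Rightarrow> real"
  assumes der: "(f has_derivative (\<lambda>h. inner g h)) (at y)" and e: "0 < e" and L: "0 \<le> L"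
    and b: "\<And>z. z \<in> ball y e \<Longrightarrow> \<bar>f z - f y\<bar> \<le> L * norm (z - y)"
  shows "norm g \<le> L"
proof (rule ccontr)
  assume "\<not> ?thesis"
  then have gL: "L < norm g" by simp
  then have ng: "0 < norm g" using L by linarith
  define \<epsilon> where "\<epsilon> = (norm g - L) / 2"
  have \<epsilon>pos: "0 < \<epsilon>" using gL by (simp add: \<epsilon>_def)
  obtain d where d0: "0 < d" and dd: "\<And>z. norm (z - y) < d \<Longrightarrow>
      norm (f z - f y - inner g (z - y)) \<le> \<epsilon> * norm (z - y)"
    using der[unfolded has_derivative_at_alt] \<epsilon>pos by blast
  define t where "t = min d e / (2 * norm g)"
  have t0: "0 < t" using d0 e ng by (simp add: t_def)
  define z where "z = y + t *\<^sub>R g"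
  have nz: "norm (z - y) = t * norm g" using t0 by (simp add: z_def)
  have "t * norm g = min d e / 2" using ng by (simp add: t_def)
  moreover have "min d e / 2 < d" "min d e / 2 < e" using d0 e by auto
  ultimately have tl: "t * norm g < d" "t * norm g < e" by auto
  have zb: "z \<in> ball y e" using tl nz by (simp add: dist_norm norm_minus_commute)
  have ip: "inner g (z - y) = t * (norm g * norm g)"
    by (simp add: z_def power2_norm_eq_inner[symmetric] power2_eq_square)
  have 1: "\<bar>f z - f y - t * (norm g * norm g)\<bar> \<le> \<epsilon> * (t * norm g)"
    using dd[of z] tl nz ip by simp
  have 2: "\<bar>f z - f y\<bar> \<le> L * (t * norm g)" using b[OF zb] nz by simp
  have "t * norm g * norm g \<le> t * norm g * (L + \<epsilon>)"
    using 1 2 by (simp add: algebra_simps)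
  then have "norm g \<le> L + \<epsilon>"
    using t0 ng by (simp add: mult_le_cancel_left_pos)
  then have "norm g \<le> L + (norm g - L) / 2" unfolding \<epsilon>_def .
  then have "norm g * 2 \<le> L * 2 + (norm g - L)" by (simp add: field_simps)
  then show False using gL by argo
qed

lemma L_inv:
  fixes V :: "'b::euclidean_space \<Rightarrow> real"
  assumes nu: "nuok \<nu>" and V0: "\<And>z. 0 \<le> V z" and cV: "isCont V y"
    and pos: "\<And>s. 0 < s \<Longrightarrow> 0 < \<nu> s"
    and np: "0 < nt \<nu> (V y)"
    and D: "((\<lambda>z. Gt \<nu> (V z)) has_derivative (\<lambda>h. inner q h)) (at y)"
  shows "(V has_derivative (\<lambda>h. inner ((1 / nt \<nu> (V y)) *\<^sub>R q) h)) (at y)"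
proof -
  define s0 where "s0 = V y"
  define n0 where "n0 = nt \<nu> s0"
  have n0: "0 < n0" using np by (simp add: n0_def s0_def)
  have s0: "0 \<le> s0" using V0 by (simp add: s0_def)
  define d where "d = (if 0 < s0 then s0/2 else 1/2)"
  have d0: "0 < d" by (simp add: d_def)
  have dint: "-1 < z \<and> 0 < nt \<nu> z" if "\<bar>z - s0\<bar> \<le> d" for z
  proof (cases "0 < s0")
    case True
    have "- (z - s0) \<le> d" using abs_ge_minus_self[of "z - s0"] that by linarith
    then have "0 < z" using True by (simp add: d_def)
    then show ?thesis using pos[of z] nt_pos[of z] by simp
  next
    case False
    then have s00: "s0 = 0" using s0 by simp
    then have z: "-1/2 \<le> z" using that by (simp add: d_def)
    have "nt \<nu> (-1) \<le> nt \<nu> z" by (rule nt_mono[OF nu]) (use z in simp)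
    moreover have "nt \<nu> (-1) = n0" by (simp add: n0_def s00 nt_def)
    ultimately show ?thesis using z n0 by simp
  qed
  let ?I = "{s0 - d..s0 + d}"
  have strict: "Gt \<nu> a < Gt \<nu> b" if ab: "a \<in> ?I" "b \<in> ?I" "a < b" for a b
  proof -
    have a1: "-1 < a" using dint[of a] ab by (simp add: abs_if)
    obtain z where z: "a < z" "z < b" "Gt \<nu> b - Gt \<nu> a = (b - a) * nt \<nu> z"
      using Gt_mvt[OF nu a1 ab(3)] by blast
    have "\<bar>z - s0\<bar> \<le> d" using z ab by (simp add: abs_if)
    then have "0 < nt \<nu> z" using dint by blast
    then have "0 < (b - a) * nt \<nu> z" using ab by simp
    then show ?thesis using z by linarith
  qed
  have inj: "inj_on (Gt \<nu>) ?I"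
    by (rule strict_mono_on_imp_inj_on) (auto intro!: strict_mono_onI strict)
  define H where "H = the_inv_into ?I (Gt \<nu>)"
  have HG: "H (Gt \<nu> z) = z" if "\<bar>z - s0\<bar> \<le> d" for z
    unfolding H_def by (rule the_inv_into_f_f[OF inj]) (use that in \<open>simp add: abs_le_iff\<close>)
  have cG: "isCont (Gt \<nu>) z" if "\<bar>z - s0\<bar> \<le> d" for z
    using Gt_isCont[OF nu] dint[OF that] by blast
  have cH: "isCont H (Gt \<nu> s0)"
    by (rule isCont_inverse_function[OF d0 HG cG])
  have I1: "s0 - d \<in> ?I" "s0 + d \<in> ?I" "s0 \<in> ?I" using d0 by auto
  have GH: "Gt \<nu> (H w) = w" if w: "Gt \<nu> (s0 - d) < w" "w < Gt \<nu> (s0 + d)" for w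
  proof -
    have "continuous_on ?I (Gt \<nu>)"
      by (rule continuous_at_imp_continuous_on) (auto intro!: cG simp: abs_le_iff)
    then obtain z where z: "s0 - d \<le> z" "z \<le> s0 + d" "Gt \<nu> z = w"
      using IVT'[of "Gt \<nu>" "s0 - d" w "s0 + d"] w d0 by force
    then have "H w = z" using HG[of z] by (simp add: abs_le_iff)
    then show ?thesis using z by simp
  qed
  have dG: "DERIV (Gt \<nu>) (H (Gt \<nu> s0)) :> n0"
    using HG[of s0] d0 Gt_deriv[OF nu, of s0] s0 by (simp add: n0_def)
  have DH: "DERIV H (Gt \<nu> s0) :> inverse n0"
    by (rule DERIV_inverse_function[OF dG _ _ _ GH cH])
       (use n0 strict I1 d0 in auto)
  have DH': "(H has_derivative (\<lambda>x. inverse n0 * x)) (at (Gt \<nu> (V y)))"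
    using DH by (simp add: has_field_derivative_def s0_def)
  have comp: "((\<lambda>z. H (Gt \<nu> (V z))) has_derivative (\<lambda>h. inverse n0 * inner q h)) (at y)"
    using has_derivative_compose[OF D DH'] .
  obtain \<delta> where \<delta>: "0 < \<delta>" "\<And>z. dist z y < \<delta> \<Longrightarrow> dist (V z) (V y) < d"
    using cV[unfolded continuous_at_eps_delta] d0 by blast
  have "(V has_derivative (\<lambda>h. inverse n0 * inner q h)) (at y)"
  proof (rule has_derivative_transform_within[OF comp \<delta>(1)])
    fix z assume "dist z y < \<delta>"
    then have "\<bar>V z - s0\<bar> \<le> d" using \<delta>(2)[of z] by (simp add: dist_real_def s0_def)
    then show "H (Gt \<nu> (V z)) = V z" using HG by blast
  qed auto
  moreover have "(\<lambda>h. inverse n0 * inner q h) = (\<lambda>h. inner ((1 / nt \<nu> (V y)) *\<^sub>R q) h)"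
    by (simp add: fun_eq_iff n0_def s0_def divide_inverse)
  ultimately show ?thesis by simp
qed

lemma deriv_split:
  fixes V1 :: "'a::euclidean_space \<Rightarrow> real" and P :: "'b::euclidean_space \<Rightarrow> real"
  assumes D: "((\<lambda>z. P (snd z) + V1 (fst z)) has_derivative (\<lambda>h. inner g h)) (at (y1, y2))"
  shows "(V1 has_derivative (\<lambda>h. inner (fst g) h)) (at y1)"
    and "(P has_derivative (\<lambda>h. inner (snd g) h)) (at y2)"
proof -
  have e1: "((\<lambda>z. (z, y2)) has_derivative (\<lambda>h. (h, 0))) (at y1)"
    by (rule has_derivative_Pair[OF has_derivative_ident has_derivative_const])
  have "((\<lambda>z. P (snd (z, y2)) + V1 (fst (z, y2))) has_derivative (\<lambda>h. inner g (h, 0))) (at y1)"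
    using has_derivative_compose[OF e1 D] by simp
  then have "((\<lambda>z. P y2 + V1 z) has_derivative (\<lambda>h. inner g (h, 0))) (at y1)" by simp
  then have "((\<lambda>z. P y2 + V1 z - P y2) has_derivative (\<lambda>h. inner g (h, 0) - 0)) (at y1)"
    by (rule has_derivative_diff[OF _ has_derivative_const])
  then show "(V1 has_derivative (\<lambda>h. inner (fst g) h)) (at y1)"
    by (simp add: inner_Pair_0)
  have e2: "((\<lambda>z. (y1, z)) has_derivative (\<lambda>h. (0, h))) (at y2)"
    by (rule has_derivative_Pair[OF has_derivative_const has_derivative_ident])
  have "((\<lambda>z. P (snd (y1, z)) + V1 (fst (y1, z))) has_derivative (\<lambda>h. inner g (0, h))) (at y2)"
    using has_derivative_compose[OF e2 D] by simp
  then have "((\<lambda>z. P z + V1 y1) has_derivative (\<lambda>h. inner g (0, h))) (at y2)" by simp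
  then have "((\<lambda>z. P z + V1 y1 - V1 y1) has_derivative (\<lambda>h. inner g (0, h) - 0)) (at y2)"
    by (rule has_derivative_diff[OF _ has_derivative_const])
  then show "(P has_derivative (\<lambda>h. inner (snd g) h)) (at y2)"
    by (simp add: inner_Pair_0)
qed

lemma loc_lip_cont:
  assumes "loc_lipschitz V" shows "isCont V x"
proof -
  obtain e L where "0 < e" "L-lipschitz_on (ball x e) V"
    using assms unfolding loc_lipschitz_def by blast
  then show ?thesis
    using continuous_on_interior[OF lipschitz_on_continuous_on, of L "ball x e" V x]
    by (simp add: interior_open)
qed



definition LG :: "('a::euclidean_space \<Rightarrow> real) \<Rightarrow> 'a \<Rightarrow> 'a set" where
  "LG V x = {g. \<exists>xk gk. xk \<longlonglongrightarrow> x \<and> gk \<longlonglongrightarrow> g \<and>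
          (\<forall>k. (V has_derivative (\<lambda>h. inner (gk k) h)) (at (xk k)))}"

lemma CG_LG: "clarke_grad V x = convex hull (LG V x)"
  unfolding clarke_grad_def LG_def ..

definition Wt :: "(real \<Rightarrow> real) \<Rightarrow> ('a::euclidean_space \<Rightarrow> real) \<Rightarrow> ('b::euclidean_space \<Rightarrow> real) \<Rightarrow> 'a \<times> 'b \<Rightarrow> real" where
  "Wt \<nu> V1 V2 = (\<lambda>z. Gt \<nu> (V2 (snd z)) + V1 (fst z))"

lemma LG_sub:
  fixes V1 :: "'a::euclidean_space \<Rightarrow> real" and V2 :: "'b::euclidean_space \<Rightarrow> real"
  assumes nu: "nuok \<nu>" and pos: "\<And>s. 0 < s \<Longrightarrow> 0 < \<nu> s" and V0: "\<And>z. 0 \<le> V2 z"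
    and L2: "loc_lipschitz V2"
    and g: "g \<in> LG (Wt \<nu> V1 V2) (x1, x2)"
  shows "fst g \<in> LG V1 x1"
    and "0 < nt \<nu> (V2 x2) \<Longrightarrow> \<exists>h\<in>LG V2 x2. snd g = nt \<nu> (V2 x2) *\<^sub>R h"
    and "nt \<nu> (V2 x2) = 0 \<Longrightarrow> snd g = 0"
proof -
  obtain xk gk where xk: "xk \<longlonglongrightarrow> (x1, x2)" and gk: "gk \<longlonglongrightarrow> g"
    and D: "\<And>k. (Wt \<nu> V1 V2 has_derivative (\<lambda>h. inner (gk k) h)) (at (xk k))"
    using g unfolding LG_def by blast
  define y1 where "y1 k = fst (xk k)" for k
  define y2 where "y2 k = snd (xk k)" for k
  have xk_eq: "xk k = (y1 k, y2 k)" for k by (simp add: y1_def y2_def)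
  have DD: "((\<lambda>z. Gt \<nu> (V2 (snd z)) + V1 (fst z)) has_derivative (\<lambda>h. inner (gk k) h)) (at (y1 k, y2 k))" for k
    using D[of k] unfolding Wt_def xk_eq .
  have D1: "(V1 has_derivative (\<lambda>h. inner (fst (gk k)) h)) (at (y1 k))" for k
    using deriv_split(1)[OF DD[of k]] .
  have D2: "((\<lambda>z. Gt \<nu> (V2 z)) has_derivative (\<lambda>h. inner (snd (gk k)) h)) (at (y2 k))" for k
    using deriv_split(2)[OF DD[of k]] .
  have y1: "y1 \<longlonglongrightarrow> x1" using tendsto_fst[OF xk] unfolding y1_def by simp
  have y2: "y2 \<longlonglongrightarrow> x2" using tendsto_snd[OF xk] unfolding y2_def by simp
  have g1: "(\<lambda>k. fst (gk k)) \<longlonglongrightarrow> fst g" by (rule tendsto_fst[OF gk])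
  have g2: "(\<lambda>k. snd (gk k)) \<longlonglongrightarrow> snd g" by (rule tendsto_snd[OF gk])
  show "fst g \<in> LG V1 x1" unfolding LG_def using y1 g1 D1 by blast
  have cV2: "isCont V2 z" for z using loc_lip_cont[OF L2] .
  have cnt: "isCont (\<lambda>z. nt \<nu> (V2 z)) x2"
    by (rule isCont_o2[OF cV2 nt_isCont[OF nu]])
  have cn: "(\<lambda>k. nt \<nu> (V2 (y2 k))) \<longlonglongrightarrow> nt \<nu> (V2 x2)"
    by (rule isCont_tendsto_compose[OF cnt y2])
  {
    assume n0: "0 < nt \<nu> (V2 x2)"
    obtain N where N: "\<And>k. N \<le> k \<Longrightarrow> 0 < nt \<nu> (V2 (y2 k))"
      using order_tendstoD(1)[OF cn n0] unfolding eventually_sequentially by blast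
    define h where "h k = (1 / nt \<nu> (V2 (y2 (k+N)))) *\<^sub>R snd (gk (k+N))" for k
    have hD: "(V2 has_derivative (\<lambda>v. inner (h k) v)) (at (y2 (k+N)))" for k
      unfolding h_def by (rule L_inv[OF nu V0 cV2 pos N D2]) simp_all
    have cnN: "(\<lambda>k. nt \<nu> (V2 (y2 (k+N)))) \<longlonglongrightarrow> nt \<nu> (V2 x2)"
      using LIMSEQ_ignore_initial_segment[OF cn, of N] .
    have g2N: "(\<lambda>k. snd (gk (k+N))) \<longlonglongrightarrow> snd g"
      using LIMSEQ_ignore_initial_segment[OF g2, of N] .
    have ht: "h \<longlonglongrightarrow> (1 / nt \<nu> (V2 x2)) *\<^sub>R snd g"
      unfolding h_def
      by (rule tendsto_scaleR[OF tendsto_divide[OF tendsto_const cnN] g2N]) (use n0 in simp)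
    have "(1 / nt \<nu> (V2 x2)) *\<^sub>R snd g \<in> LG V2 x2"
      unfolding LG_def using LIMSEQ_ignore_initial_segment[OF y2, of N] ht hD by blast
    moreover have "snd g = nt \<nu> (V2 x2) *\<^sub>R ((1 / nt \<nu> (V2 x2)) *\<^sub>R snd g)" using n0 by simp
    ultimately show "\<exists>h\<in>LG V2 x2. snd g = nt \<nu> (V2 x2) *\<^sub>R h" by blast
  }
  {
    assume n0: "nt \<nu> (V2 x2) = 0"
    have "(\<lambda>k. snd (gk k)) \<longlonglongrightarrow> 0"
      unfolding LIMSEQ_iff
    proof (intro allI impI)
      fix r :: real assume r: "0 < r"
      obtain e2 L where e2: "0 < e2" and lip: "L-lipschitz_on (ball x2 e2) V2"
        using L2 unfolding loc_lipschitz_def by blast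
      have L0: "0 \<le> L" using lipschitz_on_nonneg[OF lip] .
      define \<epsilon> where "\<epsilon> = r / (L + 1)"
      have \<epsilon>0: "0 < \<epsilon>" using r L0 by (simp add: \<epsilon>_def)
      obtain e3 where e3: "0 < e3" "\<And>z. dist z x2 < e3 \<Longrightarrow> dist (nt \<nu> (V2 z)) (nt \<nu> (V2 x2)) < \<epsilon>"
        using cnt[unfolded continuous_at_eps_delta] \<epsilon>0 by blast
      define e where "e = min e2 e3"
      have e0: "0 < e" using e2 e3 by (simp add: e_def)
      have "0 < e / 2" using e0 by simp
      then obtain N where N: "\<And>k. N \<le> k \<Longrightarrow> dist (y2 k) x2 < e/2"
        using y2[unfolded LIMSEQ_def] by blast
      have inball: "z \<in> ball x2 e2 \<and> nt \<nu> (V2 z) < \<epsilon>" if zz: "dist z x2 < e" for z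
      proof -
        have "dist (nt \<nu> (V2 z)) 0 < \<epsilon>" using e3(2)[of z] zz n0 by (simp add: e_def)
        then have "nt \<nu> (V2 z) < \<epsilon>" by (simp add: dist_real_def)
        moreover have "dist x2 z < e2" using zz by (simp add: e_def dist_commute)
        ultimately show ?thesis by simp
      qed
      have "\<epsilon> * L < \<epsilon> * (L + 1)" using \<epsilon>0 by simp
      moreover have "\<epsilon> * (L + 1) = r" using L0 by (simp add: \<epsilon>_def)
      ultimately have \<epsilon>L: "\<epsilon> * L < r" by simp
      show "\<exists>no. \<forall>n\<ge>no. norm (snd (gk n) - 0) < r"
      proof (intro exI allI impI)
        fix k assume k: "N \<le> k"
        have yk: "dist (y2 k) x2 < e" using N[OF k] e0 by linarith
        have "norm (snd (gk k)) \<le> \<epsilon> * L"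
        proof (rule grad_norm_le[OF D2[of k], of "e/2"])
          show "0 < e/2" using e0 by simp
          show "0 \<le> \<epsilon> * L" using \<epsilon>0 L0 by simp
          fix z assume z: "z \<in> ball (y2 k) (e/2)"
          have "dist z x2 \<le> dist z (y2 k) + dist (y2 k) x2" by (rule dist_triangle)
          moreover have "dist z (y2 k) < e/2" using z by (simp add: dist_commute)
          ultimately have zd: "dist z x2 < e" using N[OF k] by linarith
          have A: "z \<in> ball x2 e2" "nt \<nu> (V2 z) < \<epsilon>" using inball[OF zd] by auto
          have B: "y2 k \<in> ball x2 e2" "nt \<nu> (V2 (y2 k)) < \<epsilon>" using inball[OF yk] by auto
          have lipz: "\<bar>V2 z - V2 (y2 k)\<bar> \<le> L * norm (z - y2 k)"
            using lipschitz_onD[OF lip A(1) B(1)] by (simp add: dist_real_def dist_norm)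
          have m1: "-1 < V2 z" "-1 < V2 (y2 k)" using V0[of z] V0[of "y2 k"] by linarith+
          have "\<bar>Gt \<nu> (V2 z) - Gt \<nu> (V2 (y2 k))\<bar>
              \<le> max (nt \<nu> (V2 z)) (nt \<nu> (V2 (y2 k))) * \<bar>V2 z - V2 (y2 k)\<bar>"
            by (rule Gt_lip[OF nu m1])
          also have "\<dots> \<le> \<epsilon> * (L * norm (z - y2 k))"
            by (rule mult_mono) (use A B lipz \<epsilon>0 in auto)
          finally show "\<bar>Gt \<nu> (V2 z) - Gt \<nu> (V2 (y2 k))\<bar> \<le> \<epsilon> * L * norm (z - y2 k)"
            by (simp add: mult.assoc)
        qed
        then show "norm (snd (gk k) - 0) < r" using \<epsilon>L by simp
      qed
    qed
    then show "snd g = 0" using LIMSEQ_unique[OF g2] by blast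
  }
qed

lemma LG_sup:
  fixes V1 :: "'a::euclidean_space \<Rightarrow> real" and V2 :: "'b::euclidean_space \<Rightarrow> real"
  assumes nu: "nuok \<nu>" and V0: "\<And>z. 0 \<le> V2 z" and cV2: "\<And>z. isCont V2 z"
    and g1: "g1 \<in> LG V1 x1" and h: "h \<in> LG V2 x2"
  shows "(g1, nt \<nu> (V2 x2) *\<^sub>R h) \<in> LG (Wt \<nu> V1 V2) (x1, x2)"
proof -
  obtain a ga where a: "a \<longlonglongrightarrow> x1" "ga \<longlonglongrightarrow> g1"
      "\<And>k. (V1 has_derivative (\<lambda>v. inner (ga k) v)) (at (a k))"
    using g1 unfolding LG_def by blast
  obtain b gb where b: "b \<longlonglongrightarrow> x2" "gb \<longlonglongrightarrow> h"
      "\<And>k. (V2 has_derivative (\<lambda>v. inner (gb k) v)) (at (b k))"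
    using h unfolding LG_def by blast
  have cnt: "isCont (\<lambda>z. nt \<nu> (V2 z)) x2"
    by (rule isCont_o2[OF cV2 nt_isCont[OF nu]])
  have cn: "(\<lambda>k. nt \<nu> (V2 (b k))) \<longlonglongrightarrow> nt \<nu> (V2 x2)"
    by (rule isCont_tendsto_compose[OF cnt b(1)])
  have D: "(Wt \<nu> V1 V2 has_derivative (\<lambda>v. inner (ga k, nt \<nu> (V2 (b k)) *\<^sub>R gb k) v)) (at (a k, b k))" for k
  proof -
    have fs: "((\<lambda>z::'a\<times>'b. fst z) has_derivative (\<lambda>v. fst v)) (at (a k, b k))"
      by (rule has_derivative_fst[OF has_derivative_ident])
    have sn: "((\<lambda>z::'a\<times>'b. snd z) has_derivative (\<lambda>v. snd v)) (at (a k, b k))"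
      by (rule has_derivative_snd[OF has_derivative_ident])
    have a3: "(V1 has_derivative (\<lambda>v. inner (ga k) v)) (at (fst (a k, b k)))" using a(3) by simp
    have b3: "(V2 has_derivative (\<lambda>v. inner (gb k) v)) (at (snd (a k, b k)))" using b(3) by simp
    have f1: "((\<lambda>z. V1 (fst z)) has_derivative (\<lambda>v. inner (ga k) (fst v))) (at (a k, b k))"
      using has_derivative_compose[OF fs a3] .
    have f2: "((\<lambda>z. V2 (snd z)) has_derivative (\<lambda>v. inner (gb k) (snd v))) (at (a k, b k))"
      using has_derivative_compose[OF sn b3] .
    have "-1 < V2 (b k)" using V0[of "b k"] by linarith
    then have gd: "(Gt \<nu> has_derivative (\<lambda>x. nt \<nu> (V2 (b k)) * x)) (at (V2 (snd (a k, b k))))"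
      using Gt_deriv[OF nu] by (simp add: has_field_derivative_def)
    have f3: "((\<lambda>z. Gt \<nu> (V2 (snd z))) has_derivative (\<lambda>v. nt \<nu> (V2 (b k)) * inner (gb k) (snd v))) (at (a k, b k))"
      using has_derivative_compose[OF f2 gd] .
    have f4: "((\<lambda>z. Gt \<nu> (V2 (snd z)) + V1 (fst z)) has_derivative
        (\<lambda>v. nt \<nu> (V2 (b k)) * inner (gb k) (snd v) + inner (ga k) (fst v))) (at (a k, b k))"
      by (rule has_derivative_add[OF f3 f1])
    have eq: "(\<lambda>v. nt \<nu> (V2 (b k)) * inner (gb k) (snd v) + inner (ga k) (fst v))
        = (\<lambda>v. inner (ga k, nt \<nu> (V2 (b k)) *\<^sub>R gb k) v)"
      by (simp add: fun_eq_iff inner_prod_def)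
    show ?thesis using f4 unfolding eq Wt_def .
  qed
  have t1: "(\<lambda>k. (a k, b k)) \<longlonglongrightarrow> (x1, x2)" by (rule tendsto_Pair[OF a(1) b(1)])
  have t2: "(\<lambda>k. (ga k, nt \<nu> (V2 (b k)) *\<^sub>R gb k)) \<longlonglongrightarrow> (g1, nt \<nu> (V2 x2) *\<^sub>R h)"
    by (rule tendsto_Pair[OF a(2) tendsto_scaleR[OF cn b(2)]])
  show ?thesis unfolding LG_def using t1 t2 D by blast
qed

lemma CG_sup:
  fixes V1 :: "'a::euclidean_space \<Rightarrow> real" and V2 :: "'b::euclidean_space \<Rightarrow> real"
  assumes nu: "nuok \<nu>" and V0: "\<And>z. 0 \<le> V2 z" and cV2: "\<And>z. isCont V2 z"
    and p1: "p1 \<in> clarke_grad V1 x1" and p2: "p2 \<in> clarke_grad V2 x2"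
  shows "(p1, nt \<nu> (V2 x2) *\<^sub>R p2) \<in> clarke_grad (Wt \<nu> V1 V2) (x1, x2)"
proof -
  define c where "c = nt \<nu> (V2 x2)"
  have sub: "LG V1 x1 \<times> ((\<lambda>x. c *\<^sub>R x) ` LG V2 x2) \<subseteq> LG (Wt \<nu> V1 V2) (x1, x2)"
    using LG_sup[OF nu V0 cV2] by (auto simp: c_def)
  have "(p1, c *\<^sub>R p2) \<in> (convex hull (LG V1 x1)) \<times> ((\<lambda>x. c *\<^sub>R x) ` (convex hull (LG V2 x2)))"
  proof (rule SigmaI)
    show "p1 \<in> convex hull (LG V1 x1)" using p1 by (simp add: CG_LG)
    have "p2 \<in> convex hull (LG V2 x2)" using p2 by (simp add: CG_LG)
    then show "c *\<^sub>R p2 \<in> (\<lambda>x. c *\<^sub>R x) ` (convex hull (LG V2 x2))" by (rule imageI)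
  qed
  also have "\<dots> = convex hull (LG V1 x1 \<times> ((\<lambda>x. c *\<^sub>R x) ` LG V2 x2))"
    by (simp add: convex_hull_Times convex_hull_scaling)
  also have "\<dots> \<subseteq> convex hull (LG (Wt \<nu> V1 V2) (x1, x2))"
    by (rule hull_mono[OF sub])
  finally show ?thesis by (simp add: CG_LG c_def)
qed

lemma CG_const:
  fixes V1 :: "'a::euclidean_space \<Rightarrow> real" and V2 :: "'b::euclidean_space \<Rightarrow> real"
  assumes nu: "nuok \<nu>" and pos: "\<And>s. 0 < s \<Longrightarrow> 0 < \<nu> s" and V0: "\<And>z. 0 \<le> V2 z"
    and L2: "loc_lipschitz V2"
    and h1: "\<forall>p\<in>clarke_grad V1 x1. inner p d1 = c1"
    and h2: "\<forall>p\<in>clarke_grad V2 x2. inner p d2 = c2"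
  shows "\<forall>v\<in>clarke_grad (Wt \<nu> V1 V2) (x1, x2).
           inner v (d1, d2) = c1 + (if 0 < nt \<nu> (V2 x2) then nt \<nu> (V2 x2) * c2 else 0)"
proof -
  define C where "C = c1 + (if 0 < nt \<nu> (V2 x2) then nt \<nu> (V2 x2) * c2 else 0)"
  have "LG (Wt \<nu> V1 V2) (x1, x2) \<subseteq> {v. inner (d1, d2) v = C}"
  proof
    fix g assume g: "g \<in> LG (Wt \<nu> V1 V2) (x1, x2)"
    have "fst g \<in> clarke_grad V1 x1"
      using LG_sub(1)[OF nu pos V0 L2 g] hull_subset[of "LG V1 x1" convex] by (auto simp: CG_LG)
    then have a: "inner (fst g) d1 = c1" using h1 by blast
    have b: "inner (snd g) d2 = (if 0 < nt \<nu> (V2 x2) then nt \<nu> (V2 x2) * c2 else 0)"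
    proof (cases "0 < nt \<nu> (V2 x2)")
      case True
      then obtain h where h: "h \<in> LG V2 x2" "snd g = nt \<nu> (V2 x2) *\<^sub>R h"
        using LG_sub(2)[OF nu pos V0 L2 g] by blast
      have "h \<in> clarke_grad V2 x2"
        using h(1) hull_subset[of "LG V2 x2" convex] by (auto simp: CG_LG)
      then have "inner h d2 = c2" using h2 by blast
      then show ?thesis using h(2) True by simp
    next
      case False
      then have "nt \<nu> (V2 x2) = 0" using nt_nonneg[OF nu, of "V2 x2"] by linarith
      then have "snd g = 0" using LG_sub(3)[OF nu pos V0 L2 g] by blast
      then show ?thesis using False by simp
    qed
    show "g \<in> {v. inner (d1, d2) v = C}"
      using a b by (simp add: inner_prod_def inner_commute C_def)
  qed
  then have "convex hull (LG (Wt \<nu> V1 V2) (x1, x2)) \<subseteq> {v. inner (d1, d2) v = C}"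
    by (rule hull_minimal) (rule convex_hyperplane)
  then show ?thesis by (auto simp: CG_LG inner_commute C_def)
qed



lemma Wt_loclip:
  fixes V1 :: "'a::euclidean_space \<Rightarrow> real" and V2 :: "'b::euclidean_space \<Rightarrow> real"
  assumes nu: "nuok \<nu>" and V0: "\<And>z. 0 \<le> V2 z"
    and L1: "loc_lipschitz V1" and L2: "loc_lipschitz V2"
  shows "loc_lipschitz (Wt \<nu> V1 V2)"
  unfolding loc_lipschitz_def
proof
  fix x :: "'a \<times> 'b"
  obtain x1 x2 where x: "x = (x1, x2)" by (cases x)
  obtain e1 K1 where e1: "0 < e1" and l1: "K1-lipschitz_on (ball x1 e1) V1"
    using L1 unfolding loc_lipschitz_def by blast
  obtain e2 K2 where e2: "0 < e2" and l2: "K2-lipschitz_on (ball x2 e2) V2"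
    using L2 unfolding loc_lipschitz_def by blast
  have K1: "0 \<le> K1" using lipschitz_on_nonneg[OF l1] .
  have K2: "0 \<le> K2" using lipschitz_on_nonneg[OF l2] .
  define e where "e = min e1 e2"
  define B where "B = V2 x2 + K2 * e2"
  define K where "K = nt \<nu> B * K2 + K1"
  have e0: "0 < e" using e1 e2 by (simp add: e_def)
  have inb: "fst z \<in> ball x1 e1 \<and> snd z \<in> ball x2 e2" if "z \<in> ball x e" for z
  proof -
    have "dist x z < e" using that by simp
    then have "dist (fst x) (fst z) < e" "dist (snd x) (snd z) < e"
      using dist_fst_le[of x z] dist_snd_le[of x z] by linarith+
    then show ?thesis using x by (simp add: e_def)
  qed
  have bnd: "V2 (snd z) \<le> B" if "z \<in> ball x e" for z
  proof -
    have c: "snd z \<in> ball x2 e2" using inb[OF that] by blast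
    have x2b: "x2 \<in> ball x2 e2" using e2 by simp
    have "dist (V2 (snd z)) (V2 x2) \<le> K2 * dist (snd z) x2"
      by (rule lipschitz_onD[OF l2 c x2b])
    moreover have "dist (snd z) x2 \<le> e2" using c by (simp add: dist_commute)
    then have "K2 * dist (snd z) x2 \<le> K2 * e2" using K2 by (simp add: mult_left_mono)
    ultimately show ?thesis by (simp add: B_def dist_real_def)
  qed
  have "K-lipschitz_on (ball x e) (Wt \<nu> V1 V2)"
  proof (rule lipschitz_onI)
    show "0 \<le> K" using K1 K2 nt_nonneg[OF nu, of B] by (simp add: K_def)
    fix z w assume z: "z \<in> ball x e" and w: "w \<in> ball x e"
    have m: "-1 < V2 (snd z)" "-1 < V2 (snd w)" using V0[of "snd z"] V0[of "snd w"] by linarith+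
    have g1: "\<bar>Gt \<nu> (V2 (snd z)) - Gt \<nu> (V2 (snd w))\<bar>
        \<le> max (nt \<nu> (V2 (snd z))) (nt \<nu> (V2 (snd w))) * \<bar>V2 (snd z) - V2 (snd w)\<bar>"
      by (rule Gt_lip[OF nu m])
    have mx: "max (nt \<nu> (V2 (snd z))) (nt \<nu> (V2 (snd w))) \<le> nt \<nu> B"
      using nt_mono[OF nu bnd[OF z]] nt_mono[OF nu bnd[OF w]] by simp
    have l2zw: "\<bar>V2 (snd z) - V2 (snd w)\<bar> \<le> K2 * dist z w"
    proof -
      have "dist (V2 (snd z)) (V2 (snd w)) \<le> K2 * dist (snd z) (snd w)"
        using lipschitz_onD[OF l2] inb[OF z] inb[OF w] by blast
      also have "\<dots> \<le> K2 * dist z w" using K2 dist_snd_le[of z w] by (simp add: mult_left_mono)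
      finally show ?thesis by (simp add: dist_real_def)
    qed
    have l1zw: "\<bar>V1 (fst z) - V1 (fst w)\<bar> \<le> K1 * dist z w"
    proof -
      have "dist (V1 (fst z)) (V1 (fst w)) \<le> K1 * dist (fst z) (fst w)"
        using lipschitz_onD[OF l1] inb[OF z] inb[OF w] by blast
      also have "\<dots> \<le> K1 * dist z w" using K1 dist_fst_le[of z w] by (simp add: mult_left_mono)
      finally show ?thesis by (simp add: dist_real_def)
    qed
    have "max (nt \<nu> (V2 (snd z))) (nt \<nu> (V2 (snd w))) * \<bar>V2 (snd z) - V2 (snd w)\<bar>
        \<le> nt \<nu> B * (K2 * dist z w)"
      by (rule mult_mono[OF mx l2zw]) (use nt_nonneg[OF nu, of B] in auto)
    then have g2: "\<bar>Gt \<nu> (V2 (snd z)) - Gt \<nu> (V2 (snd w))\<bar> \<le> nt \<nu> B * K2 * dist z w"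
      using g1 by (simp add: mult.assoc)
    have "dist (Wt \<nu> V1 V2 z) (Wt \<nu> V1 V2 w)
        = \<bar>(Gt \<nu> (V2 (snd z)) - Gt \<nu> (V2 (snd w))) + (V1 (fst z) - V1 (fst w))\<bar>"
      by (simp add: Wt_def dist_real_def algebra_simps)
    also have "\<dots> \<le> \<bar>Gt \<nu> (V2 (snd z)) - Gt \<nu> (V2 (snd w))\<bar> + \<bar>V1 (fst z) - V1 (fst w)\<bar>"
      by (rule abs_triangle_ineq)
    also have "\<dots> \<le> K * dist z w" using g2 l1zw by (simp add: K_def algebra_simps)
    finally show "dist (Wt \<nu> V1 V2 z) (Wt \<nu> V1 V2 w) \<le> K * dist z w" .
  qed
  then show "\<exists>e>0. \<exists>L. L-lipschitz_on (ball x e) (Wt \<nu> V1 V2)" using e0 by blast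
qed

lemma nfst: "norm (fst v) \<le> norm v"
  using norm_fst_le[of "fst v" "snd v"] by simp

lemma nsnd: "norm (snd v) \<le> norm v"
  using norm_snd_le[of "snd v" "fst v"] by simp

lemma abs_cont_fst:
  assumes "abs_cont_on S \<phi>"
  shows "abs_cont_on S (\<lambda>t. fst (\<phi> t))" "abs_cont_on S (\<lambda>t. snd (\<phi> t))"
proof -
  show "abs_cont_on S (\<lambda>t. fst (\<phi> t))"
    unfolding abs_cont_on_def
  proof (intro allI impI)
    fix \<epsilon> :: real assume "0 < \<epsilon>"
    then obtain \<delta> where \<delta>: "0 < \<delta>" and H: "\<forall>(I::nat set) lo hi.
      finite I \<and> (\<forall>i\<in>I. lo i \<le> hi i \<and> lo i \<in> S \<and> hi i \<in> S) \<and>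
      (\<forall>i\<in>I. \<forall>j\<in>I. i \<noteq> j \<longrightarrow> {lo i<..<hi i} \<inter> {lo j<..<hi j} = {}) \<and>
      (\<Sum>i\<in>I. hi i - lo i) < \<delta> \<longrightarrow>
      (\<Sum>i\<in>I. norm (\<phi> (hi i) - \<phi> (lo i))) < \<epsilon>"
      using assms unfolding abs_cont_on_def by blast
    show "\<exists>\<delta>>0. \<forall>(I::nat set) lo hi.
      finite I \<and> (\<forall>i\<in>I. lo i \<le> hi i \<and> lo i \<in> S \<and> hi i \<in> S) \<and>
      (\<forall>i\<in>I. \<forall>j\<in>I. i \<noteq> j \<longrightarrow> {lo i<..<hi i} \<inter> {lo j<..<hi j} = {}) \<and>
      (\<Sum>i\<in>I. hi i - lo i) < \<delta> \<longrightarrow>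
      (\<Sum>i\<in>I. norm (fst (\<phi> (hi i)) - fst (\<phi> (lo i)))) < \<epsilon>"
    proof (intro exI[of _ \<delta>] conjI allI impI \<delta>)
      fix I :: "nat set" and lo hi
      assume P: "finite I \<and> (\<forall>i\<in>I. lo i \<le> hi i \<and> lo i \<in> S \<and> hi i \<in> S) \<and>
      (\<forall>i\<in>I. \<forall>j\<in>I. i \<noteq> j \<longrightarrow> {lo i<..<hi i} \<inter> {lo j<..<hi j} = {}) \<and>
      (\<Sum>i\<in>I. hi i - lo i) < \<delta>"
      have "(\<Sum>i\<in>I. norm (fst (\<phi> (hi i)) - fst (\<phi> (lo i)))) \<le> (\<Sum>i\<in>I. norm (\<phi> (hi i) - \<phi> (lo i)))"
      proof (rule sum_mono)
        fix i show "norm (fst (\<phi> (hi i)) - fst (\<phi> (lo i))) \<le> norm (\<phi> (hi i) - \<phi> (lo i))"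
          using nfst[of "\<phi> (hi i) - \<phi> (lo i)"] by simp
      qed
      also have "\<dots> < \<epsilon>" using H P by blast
      finally show "(\<Sum>i\<in>I. norm (fst (\<phi> (hi i)) - fst (\<phi> (lo i)))) < \<epsilon>" .
    qed
  qed
  show "abs_cont_on S (\<lambda>t. snd (\<phi> t))"
    unfolding abs_cont_on_def
  proof (intro allI impI)
    fix \<epsilon> :: real assume "0 < \<epsilon>"
    then obtain \<delta> where \<delta>: "0 < \<delta>" and H: "\<forall>(I::nat set) lo hi.
      finite I \<and> (\<forall>i\<in>I. lo i \<le> hi i \<and> lo i \<in> S \<and> hi i \<in> S) \<and>
      (\<forall>i\<in>I. \<forall>j\<in>I. i \<noteq> j \<longrightarrow> {lo i<..<hi i} \<inter> {lo j<..<hi j} = {}) \<and>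
      (\<Sum>i\<in>I. hi i - lo i) < \<delta> \<longrightarrow>
      (\<Sum>i\<in>I. norm (\<phi> (hi i) - \<phi> (lo i))) < \<epsilon>"
      using assms unfolding abs_cont_on_def by blast
    show "\<exists>\<delta>>0. \<forall>(I::nat set) lo hi.
      finite I \<and> (\<forall>i\<in>I. lo i \<le> hi i \<and> lo i \<in> S \<and> hi i \<in> S) \<and>
      (\<forall>i\<in>I. \<forall>j\<in>I. i \<noteq> j \<longrightarrow> {lo i<..<hi i} \<inter> {lo j<..<hi j} = {}) \<and>
      (\<Sum>i\<in>I. hi i - lo i) < \<delta> \<longrightarrow>
      (\<Sum>i\<in>I. norm (snd (\<phi> (hi i)) - snd (\<phi> (lo i)))) < \<epsilon>"
    proof (intro exI[of _ \<delta>] conjI allI impI \<delta>)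
      fix I :: "nat set" and lo hi
      assume P: "finite I \<and> (\<forall>i\<in>I. lo i \<le> hi i \<and> lo i \<in> S \<and> hi i \<in> S) \<and>
      (\<forall>i\<in>I. \<forall>j\<in>I. i \<noteq> j \<longrightarrow> {lo i<..<hi i} \<inter> {lo j<..<hi j} = {}) \<and>
      (\<Sum>i\<in>I. hi i - lo i) < \<delta>"
      have "(\<Sum>i\<in>I. norm (snd (\<phi> (hi i)) - snd (\<phi> (lo i)))) \<le> (\<Sum>i\<in>I. norm (\<phi> (hi i) - \<phi> (lo i)))"
      proof (rule sum_mono)
        fix i show "norm (snd (\<phi> (hi i)) - snd (\<phi> (lo i))) \<le> norm (\<phi> (hi i) - \<phi> (lo i))"
          using nsnd[of "\<phi> (hi i) - \<phi> (lo i)"] by simp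
      qed
      also have "\<dots> < \<epsilon>" using H P by blast
      finally show "(\<Sum>i\<in>I. norm (snd (\<phi> (hi i)) - snd (\<phi> (lo i)))) < \<epsilon>" .
    qed
  qed
qed

lemma Wt_np:
  fixes V1 :: "'a::euclidean_space \<Rightarrow> real" and V2 :: "'b::euclidean_space \<Rightarrow> real"
  assumes nu: "nuok \<nu>" and pos: "\<And>s. 0 < s \<Longrightarrow> 0 < \<nu> s" and V0: "\<And>z. 0 \<le> V2 z"
    and np1: "nonpathological V1" and np2: "nonpathological V2"
  shows "nonpathological (Wt \<nu> V1 V2)"
  unfolding nonpathological_def
proof (intro conjI allI impI)
  have L1: "loc_lipschitz V1" using np1 unfolding nonpathological_def by blast
  have L2: "loc_lipschitz V2" using np2 unfolding nonpathological_def by blast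
  show "loc_lipschitz (Wt \<nu> V1 V2)" by (rule Wt_loclip[OF nu V0 L1 L2])
  fix \<phi> :: "real \<Rightarrow> 'a \<times> 'b" and a b
  assume ac: "abs_cont_on {a..b} \<phi>"
  have A1: "AE t in lebesgue. t \<in> {a..b} \<longrightarrow> (\<lambda>t. fst (\<phi> t)) differentiable (at t) \<and>
      (\<exists>c. \<forall>v\<in>clarke_grad V1 (fst (\<phi> t)). inner v (vector_derivative (\<lambda>t. fst (\<phi> t)) (at t)) = c)"
    using np1 abs_cont_fst(1)[OF ac] unfolding nonpathological_def by blast
  have A2: "AE t in lebesgue. t \<in> {a..b} \<longrightarrow> (\<lambda>t. snd (\<phi> t)) differentiable (at t) \<and>
      (\<exists>c. \<forall>v\<in>clarke_grad V2 (snd (\<phi> t)). inner v (vector_derivative (\<lambda>t. snd (\<phi> t)) (at t)) = c)"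
    using np2 abs_cont_fst(2)[OF ac] unfolding nonpathological_def by blast
  show "AE t in lebesgue. t \<in> {a..b} \<longrightarrow> \<phi> differentiable (at t) \<and>
      (\<exists>c. \<forall>v\<in>clarke_grad (Wt \<nu> V1 V2) (\<phi> t). inner v (vector_derivative \<phi> (at t)) = c)"
    using A1 A2
  proof eventually_elim
    case (elim t)
    show ?case
    proof
      assume t: "t \<in> {a..b}"
      obtain c1 where d1: "(\<lambda>t. fst (\<phi> t)) differentiable (at t)"
        and c1: "\<forall>v\<in>clarke_grad V1 (fst (\<phi> t)). inner v (vector_derivative (\<lambda>t. fst (\<phi> t)) (at t)) = c1"
        using elim(1) t by blast
      obtain c2 where d2: "(\<lambda>t. snd (\<phi> t)) differentiable (at t)"
        and c2: "\<forall>v\<in>clarke_grad V2 (snd (\<phi> t)). inner v (vector_derivative (\<lambda>t. snd (\<phi> t)) (at t)) = c2"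
        using elim(2) t by blast
      define D1 where "D1 = vector_derivative (\<lambda>t. fst (\<phi> t)) (at t)"
      define D2 where "D2 = vector_derivative (\<lambda>t. snd (\<phi> t)) (at t)"
      have h1: "((\<lambda>t. fst (\<phi> t)) has_vector_derivative D1) (at t)"
        using d1 unfolding D1_def vector_derivative_works .
      have h2: "((\<lambda>t. snd (\<phi> t)) has_vector_derivative D2) (at t)"
        using d2 unfolding D2_def vector_derivative_works .
      have h: "(\<phi> has_vector_derivative (D1, D2)) (at t)"
        using has_vector_derivative_Pair[OF h1 h2] by simp
      have vd: "vector_derivative \<phi> (at t) = (D1, D2)" by (rule vector_derivative_at[OF h])
      have pt: "\<phi> t = (fst (\<phi> t), snd (\<phi> t))" by simp
      have "\<forall>v\<in>clarke_grad (Wt \<nu> V1 V2) (fst (\<phi> t), snd (\<phi> t)). inner v (D1, D2) =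
          c1 + (if 0 < nt \<nu> (V2 (snd (\<phi> t))) then nt \<nu> (V2 (snd (\<phi> t))) * c2 else 0)"
        by (rule CG_const[OF nu pos V0 L2]) (use c1 c2 in \<open>auto simp: D1_def D2_def\<close>)
      then have "\<exists>c. \<forall>v\<in>clarke_grad (Wt \<nu> V1 V2) (\<phi> t). inner v (vector_derivative \<phi> (at t)) = c"
        unfolding vd using pt by metis
      then show "\<phi> differentiable (at t) \<and>
          (\<exists>c. \<forall>v\<in>clarke_grad (Wt \<nu> V1 V2) (\<phi> t). inner v (vector_derivative \<phi> (at t)) = c)"
        using differentiableI_vector[OF h] by blast
    qed
  qed
qed



lemma nuok_mono: "nuok \<nu> \<Longrightarrow> 0 \<le> x \<Longrightarrow> x \<le> y \<Longrightarrow> \<nu> x \<le> \<nu> y"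
  using nt_mono[of \<nu> x y] nt_pos[of x \<nu>] nt_pos[of y \<nu>] by simp

lemma nuok_cont: "nuok \<nu> \<Longrightarrow> continuous_on {0..} \<nu>"
  unfolding nuok_def by blast

lemma nuok_nonneg: "nuok \<nu> \<Longrightarrow> 0 \<le> x \<Longrightarrow> 0 \<le> \<nu> x"
  using nt_nonneg[of \<nu> x] nt_pos[of x \<nu>] by simp

lemma nu_exists:
  assumes K1: "classKinf \<gamma>1" and K2: "classKinf \<rho>2"
    and A3: "\<exists>M>0. eventually (\<lambda>s. \<gamma>1 s / \<rho>2 s \<le> M) (at_right 0)"
  shows "\<exists>\<nu>. continuous_on {0..} \<nu> \<and> mono_on {0..} \<nu> \<and> (\<forall>s\<ge>0. \<nu> s \<ge> 0) \<and>
            (\<forall>s>0. \<nu> s \<ge> 4 * (\<gamma>1 s / \<rho>2 s))"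
proof -
  have g: "classK \<gamma>1" and r: "classK \<rho>2" using K1 K2 by (auto intro: classKinf_K)
  obtain M \<delta> where M: "0 < M" and \<delta>: "0 < \<delta>" and Mb: "\<And>s. 0 < s \<Longrightarrow> s < \<delta> \<Longrightarrow> \<gamma>1 s / \<rho>2 s \<le> M"
    using A3 unfolding eventually_at_right_field by blast
  have r\<delta>: "0 < \<rho>2 \<delta>" using classK_pos[OF r \<delta>] .
  define \<nu> where "\<nu> s = 4 * (M + \<gamma>1 s / \<rho>2 \<delta>)" for s
  have c: "continuous_on {0..} \<nu>"
    unfolding \<nu>_def
    by (intro continuous_on_mult continuous_on_const continuous_on_add continuous_on_divide
        classK_cont[OF g]) (use r\<delta> in auto)
  have m: "mono_on {0..} \<nu>"
  proof (rule mono_onI)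
    fix x y :: real assume "x \<in> {0..}" "y \<in> {0..}" "x \<le> y"
    then have "\<gamma>1 x \<le> \<gamma>1 y" using classK_mono[OF g] by auto
    then have "\<gamma>1 x / \<rho>2 \<delta> \<le> \<gamma>1 y / \<rho>2 \<delta>" using r\<delta> by (simp add: divide_right_mono)
    then show "\<nu> x \<le> \<nu> y" by (simp add: \<nu>_def)
  qed
  have n: "\<forall>s\<ge>0. \<nu> s \<ge> 0"
  proof (intro allI impI)
    fix s :: real assume "0 \<le> s"
    then have "0 \<le> \<gamma>1 s / \<rho>2 \<delta>" using classK_nonneg[OF g] r\<delta> by simp
    then show "0 \<le> \<nu> s" using M by (simp add: \<nu>_def)
  qed
  have b: "\<forall>s>0. \<nu> s \<ge> 4 * (\<gamma>1 s / \<rho>2 s)"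
  proof (intro allI impI)
    fix s :: real assume s: "0 < s"
    have q0: "0 \<le> \<gamma>1 s / \<rho>2 \<delta>" using classK_nonneg[OF g] r\<delta> s by simp
    have "\<gamma>1 s / \<rho>2 s \<le> M + \<gamma>1 s / \<rho>2 \<delta>"
    proof (cases "s < \<delta>")
      case True
      then show ?thesis using Mb[OF s True] q0 by linarith
    next
      case False
      then have "\<rho>2 \<delta> \<le> \<rho>2 s" using classK_mono[OF r] \<delta> by auto
      then have "\<gamma>1 s / \<rho>2 s \<le> \<gamma>1 s / \<rho>2 \<delta>"
        by (rule divide_left_mono) (use classK_nonneg[OF g less_imp_le[OF s]] classK_pos[OF r s] r\<delta> in auto)
      then show ?thesis using M by linarith
    qed
    then show "\<nu> s \<ge> 4 * (\<gamma>1 s / \<rho>2 s)" by (simp add: \<nu>_def)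
  qed
  show ?thesis using c m n b by blast
qed

lemma kappa_Kinf:
  assumes nu: "nuok \<nu>" and pos: "\<And>s. 0 < s \<Longrightarrow> 0 < \<nu> s"
    and R: "classKinf \<rho>2" and Gi: "classKinf Gi"
  shows "classKinf (\<lambda>t. \<nu> (Gi t) * \<rho>2 (Gi t) / 4)"
proof (rule classKinfI)
  have r: "classK \<rho>2" and g: "classK Gi" using R Gi by (auto intro: classKinf_K)
  show "classK (\<lambda>t. \<nu> (Gi t) * \<rho>2 (Gi t) / 4)"
  proof (rule classKI)
    have sub: "Gi ` {0..} \<subseteq> {0..}" using classK_nonneg[OF g] by auto
    have c1: "continuous_on {0..} (\<lambda>t. \<nu> (Gi t))"
      by (rule continuous_on_compose2[OF nuok_cont[OF nu] classK_cont[OF g] sub])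
    have c2: "continuous_on {0..} (\<lambda>t. \<rho>2 (Gi t))"
      by (rule continuous_on_compose2[OF classK_cont[OF r] classK_cont[OF g] sub])
    show "continuous_on {0..} (\<lambda>t. \<nu> (Gi t) * \<rho>2 (Gi t) / 4)"
      by (intro continuous_on_divide continuous_on_mult c1 c2 continuous_on_const) auto
    show "\<nu> (Gi 0) * \<rho>2 (Gi 0) / 4 = 0" using classK_0[OF g] classK_0[OF r] by simp
    fix x y :: real assume xy: "0 \<le> x" "x < y"
    have gx: "0 \<le> Gi x" using classK_nonneg[OF g xy(1)] .
    have gxy: "Gi x < Gi y" using classK_strict[OF g xy] .
    have n1: "\<nu> (Gi x) \<le> \<nu> (Gi y)" using nuok_mono[OF nu gx] gxy by simp
    have n2: "0 < \<nu> (Gi y)" using pos gx gxy by simp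
    have r1: "0 \<le> \<rho>2 (Gi x)" using classK_nonneg[OF r gx] .
    have r2: "\<rho>2 (Gi x) < \<rho>2 (Gi y)" using classK_strict[OF r gx gxy] .
    have "\<nu> (Gi x) * \<rho>2 (Gi x) \<le> \<nu> (Gi y) * \<rho>2 (Gi x)" using n1 r1 by (rule mult_right_mono)
    also have "\<dots> < \<nu> (Gi y) * \<rho>2 (Gi y)" using r2 n2 by simp
    finally show "\<nu> (Gi x) * \<rho>2 (Gi x) / 4 < \<nu> (Gi y) * \<rho>2 (Gi y) / 4" by simp
  qed
  fix Z :: real
  have g: "classK Gi" using Gi by (rule classKinf_K)
  have r: "classK \<rho>2" using R by (rule classKinf_K)
  define c where "c = \<nu> (Gi 1)"
  have g1: "0 < Gi 1" using classK_pos[OF g] by simp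
  have c0: "0 < c" using pos[OF g1] by (simp add: c_def)
  obtain N1 where N1: "\<And>x. N1 \<le> x \<Longrightarrow> max (4 * Z / c) 0 \<le> \<rho>2 (Gi x)"
    using classKinf_large[OF Kinf_comp[OF R Gi], of "max (4 * Z / c) 0"] by blast
  show "\<exists>N. \<forall>x\<ge>N. Z \<le> \<nu> (Gi x) * \<rho>2 (Gi x) / 4"
  proof (intro exI[of _ "max N1 1"] allI impI)
    fix x assume x: "max N1 1 \<le> x"
    have "Gi 1 \<le> Gi x" using classK_mono[OF g, of 1 x] x by simp
    then have nc: "c \<le> \<nu> (Gi x)" unfolding c_def using nuok_mono[OF nu] g1 by simp
    have rb: "max (4 * Z / c) 0 \<le> \<rho>2 (Gi x)" using N1 x by simp
    have nn: "0 \<le> \<nu> (Gi x)" using c0 nc by linarith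
    have "c * max (4 * Z / c) 0 \<le> \<nu> (Gi x) * \<rho>2 (Gi x)"
      by (rule mult_mono[OF nc rb nn]) simp
    moreover have "4 * Z \<le> c * max (4 * Z / c) 0"
    proof -
      have "c * (4 * Z / c) = 4 * Z" using c0 by simp
      moreover have "c * (4 * Z / c) \<le> c * max (4 * Z / c) 0"
        using c0 by (intro mult_left_mono) auto
      ultimately show ?thesis by simp
    qed
    ultimately show "Z \<le> \<nu> (Gi x) * \<rho>2 (Gi x) / 4" by simp
  qed
qed

lemma gamma_K:
  assumes nu: "nuok \<nu>" and G2: "classK \<gamma>2" and R: "classKinf \<rho>2i"
  shows "classK (\<lambda>r. \<gamma>2 r * (1 + \<nu> (\<rho>2i (2 * \<gamma>2 r))))"
proof (rule classKI)
  have ri: "classK \<rho>2i" using R by (rule classKinf_K)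
  have c0: "continuous_on {0..} (\<lambda>r. 2 * \<gamma>2 r)"
    using continuous_on_mult[OF continuous_on_const classK_cont[OF G2], of 2] .
  have s0: "(\<lambda>r. 2 * \<gamma>2 r) ` {0..} \<subseteq> {0..}"
  proof
    fix w assume "w \<in> (\<lambda>r. 2 * \<gamma>2 r) ` {0..}"
    then obtain r where r: "0 \<le> r" "w = 2 * \<gamma>2 r" by auto
    then show "w \<in> {0..}" using classK_nonneg[OF G2 r(1)] by simp
  qed
  have c1: "continuous_on {0..} (\<lambda>r. \<rho>2i (2 * \<gamma>2 r))"
    by (rule continuous_on_compose2[OF classK_cont[OF ri] c0 s0])
  have s1: "(\<lambda>r. \<rho>2i (2 * \<gamma>2 r)) ` {0..} \<subseteq> {0..}"
  proof
    fix w assume "w \<in> (\<lambda>r. \<rho>2i (2 * \<gamma>2 r)) ` {0..}"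
    then obtain r where r: "0 \<le> r" "w = \<rho>2i (2 * \<gamma>2 r)" by auto
    have "0 \<le> 2 * \<gamma>2 r" using classK_nonneg[OF G2 r(1)] by simp
    then show "w \<in> {0..}" using classK_nonneg[OF ri] r by simp
  qed
  have c2: "continuous_on {0..} (\<lambda>r. \<nu> (\<rho>2i (2 * \<gamma>2 r)))"
    by (rule continuous_on_compose2[OF nuok_cont[OF nu] c1 s1])
  show "continuous_on {0..} (\<lambda>r. \<gamma>2 r * (1 + \<nu> (\<rho>2i (2 * \<gamma>2 r))))"
    using continuous_on_mult[OF classK_cont[OF G2] continuous_on_add[OF continuous_on_const c2]] .
  show "\<gamma>2 0 * (1 + \<nu> (\<rho>2i (2 * \<gamma>2 0))) = 0" using classK_0[OF G2] by simp
  fix x y :: real assume xy: "0 \<le> x" "x < y"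
  have gx: "0 \<le> \<gamma>2 x" using classK_nonneg[OF G2 xy(1)] .
  have gxy: "\<gamma>2 x < \<gamma>2 y" using classK_strict[OF G2 xy] .
  have gx2: "0 \<le> 2 * \<gamma>2 x" using gx by simp
  have a: "0 \<le> \<rho>2i (2 * \<gamma>2 x)" using classK_nonneg[OF ri gx2] .
  have "2 * \<gamma>2 x \<le> 2 * \<gamma>2 y" using gxy by simp
  then have "\<rho>2i (2 * \<gamma>2 x) \<le> \<rho>2i (2 * \<gamma>2 y)" using classK_mono[OF ri gx2] by blast
  then have m: "\<nu> (\<rho>2i (2 * \<gamma>2 x)) \<le> \<nu> (\<rho>2i (2 * \<gamma>2 y))" using nuok_mono[OF nu a] by simp
  have "0 \<le> 2 * \<gamma>2 y" using gx gxy by simp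
  then have "0 \<le> \<rho>2i (2 * \<gamma>2 y)" by (rule classK_nonneg[OF ri])
  then have "0 \<le> \<nu> (\<rho>2i (2 * \<gamma>2 y))" by (rule nuok_nonneg[OF nu])
  then have p: "0 < 1 + \<nu> (\<rho>2i (2 * \<gamma>2 y))" by simp
  have "\<gamma>2 x * (1 + \<nu> (\<rho>2i (2 * \<gamma>2 x))) \<le> \<gamma>2 x * (1 + \<nu> (\<rho>2i (2 * \<gamma>2 y)))"
    using m gx by (intro mult_left_mono) auto
  also have "\<dots> < \<gamma>2 y * (1 + \<nu> (\<rho>2i (2 * \<gamma>2 y)))" using gxy p by simp
  finally show "\<gamma>2 x * (1 + \<nu> (\<rho>2i (2 * \<gamma>2 x))) < \<gamma>2 y * (1 + \<nu> (\<rho>2i (2 * \<gamma>2 y)))" .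
qed

lemma norm_pair_le:
  fixes x1 :: "'a::real_normed_vector" and x2 :: "'b::real_normed_vector"
  shows "norm (x1, x2) \<le> norm x1 + norm x2"
proof -
  have "(x1, x2) = (x1, 0) + (0, x2)" by simp
  then have "norm (x1, x2) = norm ((x1, 0) + (0, x2))" by simp
  also have "\<dots> \<le> norm (x1, 0::'b) + norm (0::'a, x2)"
    using norm_triangle_ineq[of "(x1,0::'b)" "(0::'a,x2)"] by simp
  finally show ?thesis by simp
qed


theorem proposition4:
  fixes F1 :: "'a::euclidean_space \<Rightarrow> 'b::euclidean_space \<Rightarrow> 'c::euclidean_space \<Rightarrow> 'a set"
    and F2 :: "'b \<Rightarrow> 'c \<Rightarrow> 'b set"
    and V1 :: "'a \<Rightarrow> real" and V2 :: "'b \<Rightarrow> real"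
    and a2l a2u \<rho>2 \<gamma>2 a1l a1u \<rho>1 \<gamma>1 :: "real \<Rightarrow> real"
  assumes V2_np: "nonpathological V2"
    and K2: "classKinf a2l" "classKinf a2u" "classKinf \<rho>2" "classK \<gamma>2"
    and V2_bnd: "\<And>x2. a2l (norm x2) \<le> V2 x2 \<and> V2 x2 \<le> a2u (norm x2)"
    and V2_dec: "\<And>x2 u. max_le (lie_set V2 x2 (F2 x2 u)) (- \<rho>2 (V2 x2) + \<gamma>2 (norm u))"
    and V1_np: "nonpathological V1"
    and K1: "classKinf a1l" "classKinf a1u" "classKinf \<rho>1" "classKinf \<gamma>1"
    and V1_bnd: "\<And>x1. a1l (norm x1) \<le> V1 x1 \<and> V1 x1 \<le> a1u (norm x1)"
    and V1_dec: "\<And>x1 x2 u. max_le (lie_set V1 x1 (F1 x1 x2 u))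
                    (- \<rho>1 (V1 x1) + \<gamma>1 (V2 x2) + \<gamma>2 (norm u))"
    and A3: "\<exists>M>0. eventually (\<lambda>s. \<gamma>1 s / \<rho>2 s \<le> M) (at_right 0)"
  shows "(\<exists>\<nu>. continuous_on {0..} \<nu> \<and> mono_on {0..} \<nu> \<and> (\<forall>s\<ge>0. \<nu> s \<ge> 0) \<and>
            (\<forall>s>0. \<nu> s \<ge> 4 * (\<gamma>1 s / \<rho>2 s))) \<and>
         (\<forall>\<nu>. continuous_on {0..} \<nu> \<and> mono_on {0..} \<nu> \<and> (\<forall>s\<ge>0. \<nu> s \<ge> 0) \<and>
            (\<forall>s>0. \<nu> s \<ge> 4 * (\<gamma>1 s / \<rho>2 s)) \<longrightarrow>
          (let W = (\<lambda>(x1, x2). integral {0..V2 x2} \<nu> + V1 x1) in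
            nonpathological W \<and>
            (\<exists>al au. classKinf al \<and> classKinf au \<and>
               (\<forall>x1 x2. al (norm (x1, x2)) \<le> W (x1, x2) \<and> W (x1, x2) \<le> au (norm (x1, x2)))) \<and>
            (\<exists>\<rho> \<gamma>. classKinf \<rho> \<and> classK \<gamma> \<and>
               (\<forall>x1 x2 u. max_le (lie_set W (x1, x2) (F1 x1 x2 u \<times> F2 x2 u))
                             (- \<rho> (W (x1, x2)) + \<gamma> (norm u))))))"
proof (rule conjI)
  have a2lK: "classK a2l" using K2(1) by (rule classKinf_K)
  have a2uK: "classK a2u" using K2(2) by (rule classKinf_K)
  have r2K: "classK \<rho>2" using K2(3) by (rule classKinf_K)
  have a1lK: "classK a1l" using K1(1) by (rule classKinf_K)
  have a1uK: "classK a1u" using K1(2) by (rule classKinf_K)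
  have r1K: "classK \<rho>1" using K1(3) by (rule classKinf_K)
  have g1K: "classK \<gamma>1" using K1(4) by (rule classKinf_K)
  have V2_0: "0 \<le> V2 z" for z
    using V2_bnd[of z] classK_nonneg[OF a2lK norm_ge_zero[of z]] by linarith
  have V1_0: "0 \<le> V1 z" for z
    using V1_bnd[of z] classK_nonneg[OF a1lK norm_ge_zero[of z]] by linarith
  have L2: "loc_lipschitz V2" using V2_np unfolding nonpathological_def by blast
  have cV2: "isCont V2 z" for z using loc_lip_cont[OF L2] .
  show "\<exists>\<nu>. continuous_on {0..} \<nu> \<and> mono_on {0..} \<nu> \<and> (\<forall>s\<ge>0. \<nu> s \<ge> 0) \<and>
            (\<forall>s>0. \<nu> s \<ge> 4 * (\<gamma>1 s / \<rho>2 s))"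
    by (rule nu_exists[OF K1(4) K2(3) A3])
  show "\<forall>\<nu>. continuous_on {0..} \<nu> \<and> mono_on {0..} \<nu> \<and> (\<forall>s\<ge>0. \<nu> s \<ge> 0) \<and>
            (\<forall>s>0. \<nu> s \<ge> 4 * (\<gamma>1 s / \<rho>2 s)) \<longrightarrow>
          (let W = (\<lambda>(x1, x2). integral {0..V2 x2} \<nu> + V1 x1) in
            nonpathological W \<and>
            (\<exists>al au. classKinf al \<and> classKinf au \<and>
               (\<forall>x1 x2. al (norm (x1, x2)) \<le> W (x1, x2) \<and> W (x1, x2) \<le> au (norm (x1, x2)))) \<and>
            (\<exists>\<rho> \<gamma>. classKinf \<rho> \<and> classK \<gamma> \<and>
               (\<forall>x1 x2 u. max_le (lie_set W (x1, x2) (F1 x1 x2 u \<times> F2 x2 u))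
                             (- \<rho> (W (x1, x2)) + \<gamma> (norm u)))))"
  proof (intro allI impI)
    fix \<nu> :: "real \<Rightarrow> real"
    assume h\<nu>: "continuous_on {0..} \<nu> \<and> mono_on {0..} \<nu> \<and> (\<forall>s\<ge>0. \<nu> s \<ge> 0) \<and>
            (\<forall>s>0. \<nu> s \<ge> 4 * (\<gamma>1 s / \<rho>2 s))"
    have nu: "nuok \<nu>" unfolding nuok_def using h\<nu> by blast
    have pos: "0 < \<nu> s" if s: "0 < s" for s
    proof -
      have "0 < \<gamma>1 s" using classK_pos[OF g1K s] .
      moreover have "0 < \<rho>2 s" using classK_pos[OF r2K s] .
      ultimately have "0 < 4 * (\<gamma>1 s / \<rho>2 s)" by simp
      moreover have "4 * (\<gamma>1 s / \<rho>2 s) \<le> \<nu> s" using h\<nu> s by blast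
      ultimately show ?thesis by linarith
    qed
    have pos': "\<forall>s>0. 0 < \<nu> s" using pos by blast
    define G where "G = (\<lambda>s. integral {0..s} \<nu>)"
    have GK: "classKinf G" unfolding G_def by (rule G_Kinf[OF nu pos'])
    have GKK: "classK G" using GK by (rule classKinf_K)
    have Weq: "(\<lambda>(x1, x2). integral {0..V2 x2} \<nu> + V1 x1) = Wt \<nu> V1 V2"
    proof (rule ext)
      fix z :: "'a \<times> 'b"
      obtain x1 x2 where z: "z = (x1, x2)" by (cases z)
      show "(\<lambda>(x1, x2). integral {0..V2 x2} \<nu> + V1 x1) z = Wt \<nu> V1 V2 z"
        unfolding z Wt_def using Gt_eq[OF nu V2_0[of x2]] by simp
    qed
    have Wval: "Wt \<nu> V1 V2 (x1, x2) = G (V2 x2) + V1 x1" for x1 x2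
      unfolding Wt_def G_def using Gt_eq[OF nu V2_0[of x2]] by simp
    have G0: "0 \<le> G (V2 x2)" for x2 using classK_nonneg[OF GKK V2_0] .
    show "let W = (\<lambda>(x1, x2). integral {0..V2 x2} \<nu> + V1 x1) in
            nonpathological W \<and>
            (\<exists>al au. classKinf al \<and> classKinf au \<and>
               (\<forall>x1 x2. al (norm (x1, x2)) \<le> W (x1, x2) \<and> W (x1, x2) \<le> au (norm (x1, x2)))) \<and>
            (\<exists>\<rho> \<gamma>. classKinf \<rho> \<and> classK \<gamma> \<and>
               (\<forall>x1 x2 u. max_le (lie_set W (x1, x2) (F1 x1 x2 u \<times> F2 x2 u))
                             (- \<rho> (W (x1, x2)) + \<gamma> (norm u))))"
      unfolding Let_def Weq
    proof (intro conjI)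
      show "nonpathological (Wt \<nu> V1 V2)" by (rule Wt_np[OF nu pos V2_0 V1_np V2_np])
      have alK: "classKinf (\<lambda>r. min (G (a2l (r/2))) (a1l (r/2)))"
        using Kinf_min[OF Kinf_comp[OF GK Kinf_comp[OF K2(1) Kinf_half]] Kinf_comp[OF K1(1) Kinf_half]] .
      have auK: "classKinf (\<lambda>r. G (a2u r) + a1u r)"
        using Kinf_add[OF Kinf_comp[OF GK K2(2)] K1(2)] .
      show "\<exists>al au. classKinf al \<and> classKinf au \<and>
               (\<forall>x1 x2. al (norm (x1, x2)) \<le> Wt \<nu> V1 V2 (x1, x2) \<and> Wt \<nu> V1 V2 (x1, x2) \<le> au (norm (x1, x2)))"
      proof -
        have lowb: "min (G (a2l (norm (x1, x2) / 2))) (a1l (norm (x1, x2) / 2)) \<le> Wt \<nu> V1 V2 (x1, x2)" for x1 x2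
        proof -
        have r0: "0 \<le> norm (x1, x2) / 2" by simp
        have rle: "norm (x1, x2) \<le> norm x1 + norm x2" by (rule norm_pair_le)
        show ?thesis
        proof (cases "norm x2 \<le> norm x1")
          case True
          then have "norm (x1, x2) / 2 \<le> norm x1" using rle by linarith
          then have "a1l (norm (x1, x2) / 2) \<le> a1l (norm x1)" using classK_mono[OF a1lK r0] by blast
          then have "a1l (norm (x1, x2) / 2) \<le> Wt \<nu> V1 V2 (x1, x2)"
            using V1_bnd[of x1] G0[of x2] Wval[of x1 x2] by linarith
          then show ?thesis by (simp add: min.coboundedI2)
        next
          case False
          then have "norm (x1, x2) / 2 \<le> norm x2" using rle by linarith
          then have "a2l (norm (x1, x2) / 2) \<le> a2l (norm x2)" using classK_mono[OF a2lK r0] by blast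
          then have "a2l (norm (x1, x2) / 2) \<le> V2 x2" using V2_bnd[of x2] by linarith
          then have "G (a2l (norm (x1, x2) / 2)) \<le> G (V2 x2)"
            using classK_mono[OF GKK classK_nonneg[OF a2lK r0]] by blast
          then have "G (a2l (norm (x1, x2) / 2)) \<le> Wt \<nu> V1 V2 (x1, x2)"
            using V1_0[of x1] Wval[of x1 x2] by linarith
          then show ?thesis by (simp add: min.coboundedI1)
        qed
        qed
        have uppb: "Wt \<nu> V1 V2 (x1, x2) \<le> G (a2u (norm (x1, x2))) + a1u (norm (x1, x2))" for x1 x2
        proof -
        have n1: "norm x1 \<le> norm (x1, x2)" by (rule norm_fst_le)
        have n2: "norm x2 \<le> norm (x1, x2)" by (rule norm_snd_le)
        have "a2u (norm x2) \<le> a2u (norm (x1, x2))" using classK_mono[OF a2uK norm_ge_zero n2] .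
        then have "V2 x2 \<le> a2u (norm (x1, x2))" using V2_bnd[of x2] by linarith
        then have u2: "G (V2 x2) \<le> G (a2u (norm (x1, x2)))" using classK_mono[OF GKK V2_0] by blast
        have "a1u (norm x1) \<le> a1u (norm (x1, x2))" using classK_mono[OF a1uK norm_ge_zero n1] .
        then have u1: "V1 x1 \<le> a1u (norm (x1, x2))" using V1_bnd[of x1] by linarith
        show ?thesis
          using u1 u2 Wval[of x1 x2] by linarith
        qed
        show ?thesis
          apply (rule exI[of _ "\<lambda>r. min (G (a2l (r/2))) (a1l (r/2))"])
          apply (rule exI[of _ "\<lambda>r. G (a2u r) + a1u r"])
          apply (intro conjI allI alK auK lowb uppb)
          done
      qed
      obtain \<rho>2i where \<rho>2i: "classKinf \<rho>2i" "\<And>s. 0 \<le> s \<Longrightarrow> \<rho>2i (\<rho>2 s) = s"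
          "\<And>w. 0 \<le> w \<Longrightarrow> \<rho>2 (\<rho>2i w) = w \<and> 0 \<le> \<rho>2i w"
        using Kinf_inverse[OF K2(3)] by blast
      obtain Gi where Gi: "classKinf Gi" "\<And>s. 0 \<le> s \<Longrightarrow> Gi (G s) = s"
          "\<And>w. 0 \<le> w \<Longrightarrow> G (Gi w) = w \<and> 0 \<le> Gi w"
        using Kinf_inverse[OF GK] by blast
      have r2iK: "classK \<rho>2i" using \<rho>2i(1) by (rule classKinf_K)
      define \<kappa> where "\<kappa> = (\<lambda>t. \<nu> (Gi t) * \<rho>2 (Gi t) / 4)"
      have \<kappa>K: "classKinf \<kappa>" unfolding \<kappa>_def by (rule kappa_Kinf[OF nu pos K2(3) Gi(1)])
      have \<kappa>KK: "classK \<kappa>" using \<kappa>K by (rule classKinf_K)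
      define \<rho> where "\<rho> = (\<lambda>w. min (\<rho>1 (w/2)) (\<kappa> (w/2)))"
      have \<rho>K: "classKinf \<rho>" unfolding \<rho>_def
        using Kinf_min[OF Kinf_comp[OF K1(3) Kinf_half] Kinf_comp[OF \<kappa>K Kinf_half]] .
      define \<gamma> where "\<gamma> = (\<lambda>r. \<gamma>2 r * (1 + \<nu> (\<rho>2i (2 * \<gamma>2 r))))"
      have \<gamma>K: "classK \<gamma>" unfolding \<gamma>_def by (rule gamma_K[OF nu K2(4) \<rho>2i(1)])
      show "\<exists>\<rho> \<gamma>. classKinf \<rho> \<and> classK \<gamma> \<and>
               (\<forall>x1 x2 u. max_le (lie_set (Wt \<nu> V1 V2) (x1, x2) (F1 x1 x2 u \<times> F2 x2 u))
                             (- \<rho> (Wt \<nu> V1 V2 (x1, x2)) + \<gamma> (norm u)))"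
      proof -
        have iss: "max_le (lie_set (Wt \<nu> V1 V2) (x1, x2) (F1 x1 x2 u \<times> F2 x2 u))
                             (- \<rho> (Wt \<nu> V1 V2 (x1, x2)) + \<gamma> (norm u))" for x1 x2 u
          unfolding max_le_def
        proof
          fix a assume "a \<in> lie_set (Wt \<nu> V1 V2) (x1, x2) (F1 x1 x2 u \<times> F2 x2 u)"
          then obtain f where f: "f \<in> F1 x1 x2 u \<times> F2 x2 u"
              and fa0: "\<forall>p\<in>clarke_grad (Wt \<nu> V1 V2) (x1, x2). inner p f = a"
            unfolding lie_set_def by blast
          obtain f1 f2 where ff: "f = (f1, f2)" by (cases f)
          have f1: "f1 \<in> F1 x1 x2 u" and f2: "f2 \<in> F2 x2 u" using f ff by auto
          have fa: "\<forall>p\<in>clarke_grad (Wt \<nu> V1 V2) (x1, x2). inner p (f1, f2) = a" using fa0 ff by simp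
          define c1 where "c1 = - \<rho>1 (V1 x1) + \<gamma>1 (V2 x2) + \<gamma>2 (norm u)"
          define c2 where "c2 = - \<rho>2 (V2 x2) + \<gamma>2 (norm u)"
          have ml1: "a' \<le> c1" if "a' \<in> lie_set V1 x1 (F1 x1 x2 u)" for a'
            using V1_dec[of x1 x2 u] that unfolding max_le_def c1_def by blast
          have ml2: "a' \<le> c2" if "a' \<in> lie_set V2 x2 (F2 x2 u)" for a'
            using V2_dec[of x2 u] that unfolding max_le_def c2_def by blast
          obtain q1 where q1: "q1 \<in> clarke_grad V1 x1"
          proof (cases "clarke_grad V1 x1 = {}")
            case True
            then have "c1 + 1 \<in> lie_set V1 x1 (F1 x1 x2 u)" unfolding lie_set_def using f1 by blast
            then have False using ml1[of "c1 + 1"] by linarith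
            then show ?thesis by blast
          next
            case False
            then show ?thesis using that by blast
          qed
          obtain q2 where q2: "q2 \<in> clarke_grad V2 x2"
          proof (cases "clarke_grad V2 x2 = {}")
            case True
            then have "c2 + 1 \<in> lie_set V2 x2 (F2 x2 u)" unfolding lie_set_def using f2 by blast
            then have False using ml2[of "c2 + 1"] by linarith
            then show ?thesis by blast
          next
            case False
            then show ?thesis using that by blast
          qed
          define n0 where "n0 = nt \<nu> (V2 x2)"
          have n0eq: "n0 = \<nu> (V2 x2)" unfolding n0_def using nt_pos[OF V2_0] .
          have n0nn: "0 \<le> n0" unfolding n0_def by (rule nt_nonneg[OF nu])
          have key: "inner p1 f1 + n0 * inner p2 f2 = a"
            if "p1 \<in> clarke_grad V1 x1" "p2 \<in> clarke_grad V2 x2" for p1 p2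
          proof -
            have "(p1, n0 *\<^sub>R p2) \<in> clarke_grad (Wt \<nu> V1 V2) (x1, x2)"
              using CG_sup[OF nu V2_0 cV2 that] by (simp add: n0_def)
            then have "inner (p1, n0 *\<^sub>R p2) (f1, f2) = a" using fa by blast
            then show ?thesis by simp
          qed
          define b where "b = inner q2 f2"
          have A1: "a - n0 * b \<le> c1"
          proof (rule ml1)
            have "\<forall>p\<in>clarke_grad V1 x1. inner p f1 = a - n0 * b"
              using key[OF _ q2] unfolding b_def by (simp add: algebra_simps)
            then show "a - n0 * b \<in> lie_set V1 x1 (F1 x1 x2 u)"
              unfolding lie_set_def using f1 by blast
          qed
          have B2: "b \<le> c2" if np: "0 < n0"
          proof (rule ml2)
            have "inner p f2 = b" if p: "p \<in> clarke_grad V2 x2" for p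
            proof -
              have "inner q1 f1 + n0 * inner p f2 = a" by (rule key[OF q1 p])
              moreover have "inner q1 f1 + n0 * b = a" unfolding b_def by (rule key[OF q1 q2])
              ultimately have "n0 * inner p f2 = n0 * b" by linarith
              then show ?thesis using np by simp
            qed
            then show "b \<in> lie_set V2 x2 (F2 x2 u)" unfolding lie_set_def using f2 by blast
          qed
          have v2z: "V2 x2 = 0" if "\<not> 0 < n0"
          proof (rule ccontr)
            assume "V2 x2 \<noteq> 0"
            then have "0 < V2 x2" using V2_0[of x2] by linarith
            then have "0 < n0" using pos n0eq by simp
            then show False using that by simp
          qed
          have Wv: "Wt \<nu> V1 V2 (x1, x2) = G (V2 x2) + V1 x1" by (rule Wval)
          have r2nn: "0 \<le> \<rho>2 (V2 x2)" by (rule classK_nonneg[OF r2K V2_0])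
          have r1nn: "0 \<le> \<rho>1 (V1 x1)" by (rule classK_nonneg[OF r1K V1_0])
          have g2nn: "0 \<le> \<gamma>2 (norm u)" by (rule classK_nonneg[OF K2(4) norm_ge_zero])
          have F1: "4 * \<gamma>1 (V2 x2) \<le> n0 * \<rho>2 (V2 x2)"
          proof (cases "V2 x2 = 0")
            case True
            then show ?thesis using classK_0[OF g1K] classK_0[OF r2K] by simp
          next
            case False
            then have v: "0 < V2 x2" using V2_0[of x2] by linarith
            have rp: "0 < \<rho>2 (V2 x2)" by (rule classK_pos[OF r2K v])
            have "4 * (\<gamma>1 (V2 x2) / \<rho>2 (V2 x2)) \<le> n0" using h\<nu> v n0eq by blast
            then have "4 * (\<gamma>1 (V2 x2) / \<rho>2 (V2 x2)) * \<rho>2 (V2 x2) \<le> n0 * \<rho>2 (V2 x2)"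
              using rp by (intro mult_right_mono) auto
            then show ?thesis using rp by simp
          qed
          define m where "m = \<nu> (\<rho>2i (2 * \<gamma>2 (norm u)))"
          have mnn: "0 \<le> m"
          proof -
            have "0 \<le> 2 * \<gamma>2 (norm u)" using g2nn by simp
            then have "0 \<le> \<rho>2i (2 * \<gamma>2 (norm u))" by (rule classK_nonneg[OF r2iK])
            then show ?thesis unfolding m_def by (rule nuok_nonneg[OF nu])
          qed
          have gam: "\<gamma> (norm u) = \<gamma>2 (norm u) + \<gamma>2 (norm u) * m"
            unfolding \<gamma>_def m_def by (simp add: algebra_simps)
          have F2: "\<gamma>2 (norm u) \<le> \<gamma> (norm u)" using gam g2nn mnn by simp
          have F3: "n0 * \<gamma>2 (norm u) \<le> \<gamma>2 (norm u) * m" if lt: "\<rho>2 (V2 x2) < 2 * \<gamma>2 (norm u)"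
          proof -
            have "\<rho>2i (\<rho>2 (V2 x2)) < \<rho>2i (2 * \<gamma>2 (norm u))" by (rule classK_strict[OF r2iK r2nn lt])
            then have "V2 x2 < \<rho>2i (2 * \<gamma>2 (norm u))" using \<rho>2i(2)[OF V2_0] by simp
            then have "n0 \<le> m" unfolding n0eq m_def using nuok_mono[OF nu V2_0] by simp
            then show ?thesis using g2nn by (simp add: mult_right_mono mult.commute)
          qed
          have F4: "\<rho> (G (V2 x2) + V1 x1) \<le> \<rho>1 (V1 x1) + n0 * \<rho>2 (V2 x2) / 4"
          proof (cases "G (V2 x2) \<le> V1 x1")
            case True
            have w0: "0 \<le> (G (V2 x2) + V1 x1) / 2" using G0[of x2] V1_0[of x1] by simp
            have "(G (V2 x2) + V1 x1) / 2 \<le> V1 x1" using True by simp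
            then have "\<rho>1 ((G (V2 x2) + V1 x1) / 2) \<le> \<rho>1 (V1 x1)" using classK_mono[OF r1K w0] by blast
            moreover have "0 \<le> n0 * \<rho>2 (V2 x2)" using n0nn r2nn by simp
            ultimately show ?thesis unfolding \<rho>_def by (simp add: min.coboundedI1)
          next
            case False
            have w0: "0 \<le> (G (V2 x2) + V1 x1) / 2" using G0[of x2] V1_0[of x1] by simp
            have "(G (V2 x2) + V1 x1) / 2 \<le> G (V2 x2)" using False by simp
            then have "\<kappa> ((G (V2 x2) + V1 x1) / 2) \<le> \<kappa> (G (V2 x2))" using classK_mono[OF \<kappa>KK w0] by blast
            also have "\<kappa> (G (V2 x2)) = n0 * \<rho>2 (V2 x2) / 4"
              unfolding \<kappa>_def using Gi(2)[OF V2_0] n0eq by simp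
            finally show ?thesis using r1nn unfolding \<rho>_def by (simp add: min.coboundedI2)
          qed
          show "a \<le> - \<rho> (Wt \<nu> V1 V2 (x1, x2)) + \<gamma> (norm u)"
          proof (cases "0 < n0")
            case True
            have nb: "n0 * b \<le> n0 * c2" using B2[OF True] n0nn by (rule mult_left_mono)
            then have nb': "n0 * b \<le> - (n0 * \<rho>2 (V2 x2)) + n0 * \<gamma>2 (norm u)"
              unfolding c2_def by (simp add: algebra_simps)
            show ?thesis
            proof (cases "\<rho>2 (V2 x2) < 2 * \<gamma>2 (norm u)")
              case True
              have "n0 * \<gamma>2 (norm u) \<le> \<gamma>2 (norm u) * m" by (rule F3[OF True])
              moreover have "0 \<le> n0 * \<rho>2 (V2 x2)" using n0nn r2nn by simp
              ultimately show ?thesis using A1 nb' F1 F4 gam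
                unfolding c1_def Wv by linarith
            next
              case False
              have "n0 * (2 * \<gamma>2 (norm u)) \<le> n0 * \<rho>2 (V2 x2)"
                using False n0nn by (intro mult_left_mono) auto
              then have "2 * (n0 * \<gamma>2 (norm u)) \<le> n0 * \<rho>2 (V2 x2)"
                by (simp add: mult.left_commute)
              then show ?thesis using A1 nb' F1 F2 F4
                unfolding c1_def Wv by linarith
            qed
          next
            case False
            have v: "V2 x2 = 0" using v2z[OF False] .
            have n00: "n0 = 0" using False n0nn by simp
            have "a \<le> c1" using A1 n00 by simp
            then have "a \<le> - \<rho>1 (V1 x1) + \<gamma>2 (norm u)"
              unfolding c1_def using v classK_0[OF g1K] by simp
            moreover have "\<rho> (G (V2 x2) + V1 x1) \<le> \<rho>1 (V1 x1)" using F4 n00 by simp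
            ultimately show ?thesis using F2 unfolding Wv by linarith
          qed
        qed
        show ?thesis
          apply (rule exI[of _ \<rho>], rule exI[of _ \<gamma>])
          using \<rho>K \<gamma>K iss by blast
      qed
    qed
  qed
qed


end
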